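(* Fix $d \geq 2$. There exists an oriented simplicial complex $P$, depending only on $d$, whose orientation is induced by an ordering of its vertices, such that $H_{d-1}(P)$ is presented as $\langle a, b \mid 2a = b\rangle$, where $a$ and $b$ are coherently represented by a pair of vertex-disjoint $d$-simplex boundaries.
   Context: Homology has integer coefficients. For an oriented simplicial complex $A$ and subcomplex $S$, an ordering of the vertices of $S$ is coherent if the orientation of each face of $S$ induced by it agrees with its orientation in $A$. A class $\gamma \in H_{d-1}(A)$ is coherently represented by the $d$-simplex boundary $Z$ if $Z$ is the boundary of a $d$-simplex embedded in $A$ as an induced subcomplex (the spanned $d$-face is not in $A$), $Z$ has a coherent ordering $v_0,\dots,v_d$, and $\gamma$ is homologous to $\sum_{i=0}^d (-1)^i [v_0,\dots,\hat{v_i},\dots,v_d]$. *)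

theory Defs
  imports Main
begin

text \<open>Finite abstract simplicial complexes on vertex set nat. The orientation of every
simplex is the one induced by the natural order on nat (increasing listing of vertices).\<close>

definition simplicial_complex :: "nat set set \<Rightarrow> bool" where
  "simplicial_complex K \<longleftrightarrow> finite K \<and> (\<forall>\<sigma>\<in>K. finite \<sigma> \<and> \<sigma> \<noteq> {}) \<and>
     (\<forall>\<sigma>\<in>K. \<forall>\<tau>. \<tau> \<subseteq> \<sigma> \<and> \<tau> \<noteq> {} \<longrightarrow> \<tau> \<in> K)"

definition chain :: "nat set set \<Rightarrow> nat \<Rightarrow> (nat set \<Rightarrow> int) \<Rightarrow> bool" where
  "chain K k c \<longleftrightarrow> (\<forall>\<sigma>. c \<sigma> \<noteq> 0 \<longrightarrow> \<sigma> \<in> K \<and> card \<sigma> = Suc k)"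

text \<open>Sign of the face of \<sigma> obtained by deleting v: (-1)^i where v is the i-th vertex
of \<sigma> in increasing order (counting from 0).\<close>

definition face_sign :: "nat set \<Rightarrow> nat \<Rightarrow> int" where
  "face_sign \<sigma> v = (-1) ^ card {w\<in>\<sigma>. w < v}"

text \<open>Simplicial boundary operator: \<partial>[v0,...,vk] = \<Sum> (-1)^i [v0,...,vi^,...,vk].\<close>

definition bd :: "nat set set \<Rightarrow> (nat set \<Rightarrow> int) \<Rightarrow> nat set \<Rightarrow> int" where
  "bd K c \<tau> = (if \<tau> \<in> K then
      (\<Sum>\<sigma>\<in>{\<sigma>\<in>K. \<tau> \<subseteq> \<sigma> \<and> card \<sigma> = Suc (card \<tau>)}. c \<sigma> * face_sign \<sigma> (the_elem (\<sigma> - \<tau>)))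
    else 0)"

definition is_cycle :: "nat set set \<Rightarrow> nat \<Rightarrow> (nat set \<Rightarrow> int) \<Rightarrow> bool" where
  "is_cycle K k z \<longleftrightarrow> chain K k z \<and> bd K z = (\<lambda>_. 0)"

definition is_boundary :: "nat set set \<Rightarrow> nat \<Rightarrow> (nat set \<Rightarrow> int) \<Rightarrow> bool" where
  "is_boundary K k z \<longleftrightarrow> (\<exists>c. chain K (Suc k) c \<and> z = bd K c)"

definition homologous :: "nat set set \<Rightarrow> nat \<Rightarrow> (nat set \<Rightarrow> int) \<Rightarrow> (nat set \<Rightarrow> int) \<Rightarrow> bool" where
  "homologous K k z w \<longleftrightarrow> is_cycle K k z \<and> is_cycle K k w \<and> is_boundary K k (\<lambda>\<tau>. z \<tau> - w \<tau>)"

text \<open>Number of inversions of a list (relative to the order on nat); a listing of a simplex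
induces the same orientation as the increasing listing iff this number is even.\<close>

definition inversions :: "nat list \<Rightarrow> nat" where
  "inversions xs = card {(i, j). i < j \<and> j < length xs \<and> xs ! i > xs ! j}"

text \<open>The elementary chain of the oriented simplex [w0,...,wk] given by a list of distinct
vertices: \<plusminus> the basis element of the simplex set w, sign according to the orientation.\<close>

definition osimplex :: "nat list \<Rightarrow> nat set \<Rightarrow> int" where
  "osimplex ws \<tau> = (if \<tau> = set ws then (-1) ^ inversions ws else 0)"

definition delete_nth :: "nat \<Rightarrow> nat list \<Rightarrow> nat list" where
  "delete_nth i xs = take i xs @ drop (Suc i) xs"

definition alt_bd_chain :: "nat list \<Rightarrow> nat set \<Rightarrow> int" where
  "alt_bd_chain vs \<tau> = (\<Sum>i<length vs. (-1) ^ i * osimplex (delete_nth i vs) \<tau>)"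

definition induced_simplex_boundary :: "nat set set \<Rightarrow> nat \<Rightarrow> nat set \<Rightarrow> bool" where
  "induced_simplex_boundary K d V \<longleftrightarrow> finite V \<and> card V = Suc d \<and> V \<notin> K \<and>
     (\<forall>F. F \<subseteq> V \<and> F \<noteq> {} \<and> F \<noteq> V \<longrightarrow> F \<in> K)"

text \<open>A listing vs of the vertices of the subcomplex S (faces of K contained in set vs) is
coherent if the orientation it induces on each face of S agrees with that of K.\<close>

definition coherent_ordering :: "nat set set \<Rightarrow> nat list \<Rightarrow> bool" where
  "coherent_ordering K vs \<longleftrightarrow> distinct vs \<and>
     (\<forall>F. F \<in> K \<and> F \<subseteq> set vs \<longrightarrow> even (inversions (filter (\<lambda>v. v \<in> F) vs)))"

definition coherently_represented :: "nat set set \<Rightarrow> nat \<Rightarrow> (nat set \<Rightarrow> int) \<Rightarrow> nat list \<Rightarrow> bool" where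
  "coherently_represented K d \<gamma> vs \<longleftrightarrow> length vs = Suc d \<and>
     induced_simplex_boundary K d (set vs) \<and> coherent_ordering K vs \<and>
     homologous K (d - 1) \<gamma> (alt_bd_chain vs)"

text \<open>H_k(K) is presented as <a, b | 2a = b> with a = [za], b = [zb]: za, zb are k-cycles,
their classes generate H_k(K), and the relations among them are exactly the integer
multiples of 2a - b.\<close>

definition presented_2a_eq_b :: "nat set set \<Rightarrow> nat \<Rightarrow> (nat set \<Rightarrow> int) \<Rightarrow> (nat set \<Rightarrow> int) \<Rightarrow> bool" where
  "presented_2a_eq_b K k za zb \<longleftrightarrow> is_cycle K k za \<and> is_cycle K k zb \<and>
     (\<forall>z. is_cycle K k z \<longrightarrow> (\<exists>m n::int. homologous K k z (\<lambda>\<tau>. m * za \<tau> + n * zb \<tau>))) \<and>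
     (\<forall>m n::int. is_boundary K k (\<lambda>\<tau>. m * za \<tau> + n * zb \<tau>) \<longleftrightarrow> (\<exists>j. m = 2 * j \<and> n = - j))"

end

theory Submission
  imports Defs
begin


definition bdU :: "nat set \<Rightarrow> (nat set \<Rightarrow> int) \<Rightarrow> nat set \<Rightarrow> int" where
  "bdU U c \<tau> = (\<Sum>v\<in>U - \<tau>. c (insert v \<tau>) * face_sign (insert v \<tau>) v)"

definition ind :: "nat set \<Rightarrow> nat set \<Rightarrow> int" where
  "ind X = (\<lambda>Y. if Y = X then 1 else 0)"

definition sb :: "nat set \<Rightarrow> nat set \<Rightarrow> int" where
  "sb X = (\<lambda>Y. \<Sum>v\<in>X. if Y = X - {v} then face_sign X v else 0)"

definition hc :: "(nat set \<Rightarrow> int) \<Rightarrow> nat set \<Rightarrow> int" where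
  "hc z = (\<lambda>X. if 0 \<in> X then z (X - {0}) else 0)"

lemma fin_below: "finite {x\<in>X. x < (w::nat)}"
  by (rule finite_subset[of _ "{..<w}"]) auto

lemma fs_insert_self: "v \<notin> X \<Longrightarrow> face_sign (insert v X) v = face_sign X v"
proof -
  have "{x\<in>insert v X. x < v} = {x\<in>X. x < v}" by auto
  then show ?thesis unfolding face_sign_def by simp
qed

lemma fs_insert_other: assumes "v \<notin> X" "w \<noteq> v"
  shows "face_sign (insert v X) w = (if v < w then - face_sign X w else face_sign X w)"
proof (cases "v < w")
  case True
  have "{x\<in>insert v X. x < w} = insert v {x\<in>X. x < w}" using True by auto
  moreover have "v \<notin> {x\<in>X. x < w}" using assms by auto
  ultimately have "card {x\<in>insert v X. x < w} = Suc (card {x\<in>X. x < w})"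
    using fin_below by simp
  then show ?thesis using True unfolding face_sign_def by simp
next
  case False
  have "{x\<in>insert v X. x < w} = {x\<in>X. x < w}" using False by auto
  then show ?thesis using False unfolding face_sign_def by simp
qed

lemma fs_sq: "face_sign X v * face_sign X v = 1"
  unfolding face_sign_def by (simp flip: power_mult_distrib)

lemma antisym_sum:
  fixes F :: "nat \<Rightarrow> nat \<Rightarrow> int"
  assumes "finite T" "\<And>v w. v \<in> T \<Longrightarrow> w \<in> T \<Longrightarrow> v \<noteq> w \<Longrightarrow> F w v = - F v w"
  shows "(\<Sum>v\<in>T. \<Sum>w\<in>T - {v}. F v w) = 0"
proof -
  define G where "G v w = (if v \<noteq> w then F v w else 0)" for v w
  have e: "(\<Sum>v\<in>T. \<Sum>w\<in>T - {v}. F v w) = (\<Sum>v\<in>T. \<Sum>w\<in>T. G v w)"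
  proof (rule sum.cong[OF refl])
    fix v assume "v \<in> T"
    have "(\<Sum>w\<in>T. G v w) = (\<Sum>w\<in>T - {v}. G v w) + G v v"
      using assms(1) \<open>v\<in>T\<close> by (simp add: sum.remove add.commute)
    then show "(\<Sum>w\<in>T - {v}. F v w) = (\<Sum>w\<in>T. G v w)" by (simp add: G_def)
  qed
  have "(\<Sum>v\<in>T. \<Sum>w\<in>T. G v w) = (\<Sum>w\<in>T. \<Sum>v\<in>T. G v w)" by (rule sum.swap)
  also have "\<dots> = (\<Sum>w\<in>T. \<Sum>v\<in>T. - G w v)"
  proof (intro sum.cong refl)
    fix w v assume "w \<in> T" "v \<in> T"
    then show "G v w = - G w v" unfolding G_def
      by (cases "v = w") (simp_all add: assms(2)[of w v])
  qed
  also have "\<dots> = - (\<Sum>w\<in>T. \<Sum>v\<in>T. G w v)" by (simp add: sum_negf)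
  finally show ?thesis using e by simp
qed

lemma bdU_bdU:
  assumes "finite U"
  shows "bdU U (bdU U c) = (\<lambda>_. 0)"
proof
  fix \<rho>
  define F where "F v w = c (insert w (insert v \<rho>)) * face_sign (insert w (insert v \<rho>)) w * face_sign (insert v \<rho>) v" for v w
  have "bdU U (bdU U c) \<rho> = (\<Sum>v\<in>U - \<rho>. \<Sum>w\<in>(U - \<rho>) - {v}. F v w)"
    unfolding bdU_def F_def
  proof (intro sum.cong refl)
    fix v assume "v \<in> U - \<rho>"
    have "U - insert v \<rho> = U - \<rho> - {v}" by auto
    then show "(\<Sum>w\<in>U - insert v \<rho>. c (insert w (insert v \<rho>)) * face_sign (insert w (insert v \<rho>)) w) *
          face_sign (insert v \<rho>) v =
         (\<Sum>w\<in>U - \<rho> - {v}. c (insert w (insert v \<rho>)) * face_sign (insert w (insert v \<rho>)) w * face_sign (insert v \<rho>) v)"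
      by (simp add: sum_distrib_right)
  qed
  also have "\<dots> = 0"
  proof (rule antisym_sum)
    show "finite (U - \<rho>)" using assms by simp
    fix v w assume vw: "v \<in> U - \<rho>" "w \<in> U - \<rho>" "v \<noteq> w"
    have c: "insert v (insert w \<rho>) = insert w (insert v \<rho>)" by auto
    have "F v w = c (insert w (insert v \<rho>)) * (if v < w then - face_sign \<rho> w else face_sign \<rho> w) * face_sign \<rho> v"
      unfolding F_def using vw by (simp add: fs_insert_other fs_insert_self)
    moreover have "F w v = c (insert w (insert v \<rho>)) * (if w < v then - face_sign \<rho> v else face_sign \<rho> v) * face_sign \<rho> w"
      unfolding F_def using vw c by (simp add: fs_insert_other fs_insert_self)
    ultimately show "F w v = - F v w" using vw by auto
  qed
  finally show "bdU U (bdU U c) \<rho> = 0" .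
qed



lemma fs_zero: "face_sign X 0 = 1"
  unfolding face_sign_def by simp

lemma cone:
  assumes "finite U" "0 \<in> U" "bdU U z = (\<lambda>_. 0)"
  shows "bdU U (hc z) = z"
proof
  fix \<tau>
  show "bdU U (hc z) \<tau> = z \<tau>"
  proof (cases "0 \<in> \<tau>")
    case False
    have "bdU U (hc z) \<tau> = hc z (insert 0 \<tau>) * face_sign (insert 0 \<tau>) 0 +
        (\<Sum>v\<in>U - \<tau> - {0}. hc z (insert v \<tau>) * face_sign (insert v \<tau>) v)"
      unfolding bdU_def using assms False by (simp add: sum.remove)
    also have "(\<Sum>v\<in>U - \<tau> - {0}. hc z (insert v \<tau>) * face_sign (insert v \<tau>) v) = 0"
      using False by (intro sum.neutral) (auto simp: hc_def)
    finally show ?thesis using False by (simp add: hc_def fs_zero)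
  next
    case True
    define \<rho> where "\<rho> = \<tau> - {0}"
    have r: "\<tau> = insert 0 \<rho>" "0 \<notin> \<rho>" using True by (auto simp: \<rho>_def)
    have ud: "U - \<rho> = insert 0 (U - \<tau>)" "0 \<notin> U - \<tau>" using r assms(2) by auto
    have "0 = bdU U z \<rho>" using assms(3) by simp
    also have "\<dots> = z \<tau> + (\<Sum>v\<in>U - \<tau>. z (insert v \<rho>) * face_sign (insert v \<rho>) v)"
      unfolding bdU_def ud(1) using ud(2) assms(1) r by (simp add: fs_zero)
    finally have e: "(\<Sum>v\<in>U - \<tau>. z (insert v \<rho>) * face_sign (insert v \<rho>) v) = - z \<tau>" by simp
    have "bdU U (hc z) \<tau> = (\<Sum>v\<in>U - \<tau>. - (z (insert v \<rho>) * face_sign (insert v \<rho>) v))"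
      unfolding bdU_def
    proof (intro sum.cong refl)
      fix v assume v: "v \<in> U - \<tau>"
      then have v0: "v \<noteq> 0" "v \<notin> \<rho>" using r by auto
      have "insert v \<tau> - {0} = insert v \<rho>" using r v0 by auto
      moreover have "face_sign (insert v \<tau>) v = - face_sign (insert v \<rho>) v"
        unfolding r using v0 r(2) by (simp add: insert_commute[of v 0] fs_insert_other)
      ultimately show "hc z (insert v \<tau>) * face_sign (insert v \<tau>) v = - (z (insert v \<rho>) * face_sign (insert v \<rho>) v)"
        using r by (simp add: hc_def)
    qed
    also have "\<dots> = z \<tau>" using e by (simp add: sum_negf)
    finally show ?thesis .
  qed
qed

lemma bdU_add: "bdU U (\<lambda>\<sigma>. a \<sigma> + b \<sigma>) = (\<lambda>\<tau>. bdU U a \<tau> + bdU U b \<tau>)"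
  unfolding bdU_def by (simp add: distrib_right sum.distrib)

lemma bdU_diff: "bdU U (\<lambda>\<sigma>. a \<sigma> - b \<sigma>) = (\<lambda>\<tau>. bdU U a \<tau> - bdU U b \<tau>)"
  unfolding bdU_def by (simp add: left_diff_distrib sum_subtractf)

lemma bdU_scale: "bdU U (\<lambda>\<sigma>. k * a \<sigma>) = (\<lambda>\<tau>. k * bdU U a \<tau>)"
  unfolding bdU_def by (simp add: sum_distrib_left mult.assoc)

lemma bdU_sum: "bdU U (\<lambda>\<sigma>. \<Sum>i\<in>I. f i \<sigma>) = (\<lambda>\<tau>. \<Sum>i\<in>I. bdU U (f i) \<tau>)"
  unfolding bdU_def by (simp add: sum_distrib_right sum.swap[of _ I])

lemma bdU_zero: "bdU U (\<lambda>_. 0) = (\<lambda>_. 0)"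
  unfolding bdU_def by simp

lemma bdU_ind:
  assumes "finite U" "X \<subseteq> U"
  shows "bdU U (ind X) = sb X"
proof
  fix Y
  have "bdU U (ind X) Y = (\<Sum>w\<in>U. if w \<notin> Y \<and> insert w Y = X then face_sign X w else 0)"
    unfolding bdU_def ind_def using assms(1)
    by (intro sum.mono_neutral_cong_left) auto
  also have "\<dots> = (\<Sum>w\<in>U. if w \<in> X \<and> Y = X - {w} then face_sign X w else 0)"
    by (intro sum.cong refl) auto
  also have "\<dots> = sb X Y"
    unfolding sb_def using assms
    by (intro sum.mono_neutral_cong_right) auto
  finally show "bdU U (ind X) Y = sb X Y" .
qed

lemma sb_facet:
  assumes "finite X" "v \<in> X"
  shows "sb X (X - {v}) = face_sign X v"
proof -
  have "sb X (X - {v}) = (\<Sum>w\<in>X. if w = v then face_sign X w else 0)"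
    unfolding sb_def using assms by (intro sum.cong refl) auto
  then show ?thesis using assms by simp
qed

lemma sb_nonfacet:
  assumes "\<not> (Y \<subseteq> X \<and> Suc (card Y) = card X)" "finite X"
  shows "sb X Y = 0"
  unfolding sb_def
proof (intro sum.neutral ballI)
  fix v assume v: "v \<in> X"
  have "Suc (card (X - {v})) = card X" using v assms(2) by (intro card_Suc_Diff1)
  then show "(if Y = X - {v} then face_sign X v else 0) = 0" using assms(1) by auto
qed

lemma sc_finite: "simplicial_complex K \<Longrightarrow> \<sigma> \<in> K \<Longrightarrow> finite \<sigma>"
  unfolding simplicial_complex_def by blast

lemma sc_closed: "simplicial_complex K \<Longrightarrow> \<sigma> \<in> K \<Longrightarrow> \<tau> \<subseteq> \<sigma> \<Longrightarrow> \<tau> \<noteq> {} \<Longrightarrow> \<tau> \<in> K"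
  unfolding simplicial_complex_def by blast

lemma bd_eq:
  assumes K: "simplicial_complex K" and KU: "\<forall>\<sigma>\<in>K. \<sigma> \<subseteq> U" and U: "finite U"
    and c: "chain K k c" and k: "1 \<le> k"
  shows "bd K c = bdU U c"
proof
  fix \<tau>
  show "bd K c \<tau> = bdU U c \<tau>"
  proof (cases "\<tau> \<in> K")
    case True
    then have ft: "finite \<tau>" using K by (rule sc_finite[rotated])
    define V where "V = {v\<in>U - \<tau>. insert v \<tau> \<in> K}"
    have "{\<sigma>\<in>K. \<tau> \<subseteq> \<sigma> \<and> card \<sigma> = Suc (card \<tau>)} = (\<lambda>v. insert v \<tau>) ` V"
    proof (intro set_eqI iffI)
      fix \<sigma> assume "\<sigma> \<in> {\<sigma>\<in>K. \<tau> \<subseteq> \<sigma> \<and> card \<sigma> = Suc (card \<tau>)}"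
      then have s: "\<sigma> \<in> K" "\<tau> \<subseteq> \<sigma>" "card \<sigma> = Suc (card \<tau>)" by auto
      then have fs: "finite \<sigma>" using K sc_finite by blast
      have "card (\<sigma> - \<tau>) = 1" using s fs ft by (simp add: card_Diff_subset)
      then obtain v where v: "\<sigma> - \<tau> = {v}" by (auto simp: card_Suc_eq)
      then have "\<sigma> = insert v \<tau>" using s by auto
      moreover have "v \<in> V" using v s KU \<open>\<sigma> = insert v \<tau>\<close> unfolding V_def by auto
      ultimately show "\<sigma> \<in> (\<lambda>v. insert v \<tau>) ` V" by auto
    next
      fix \<sigma> assume "\<sigma> \<in> (\<lambda>v. insert v \<tau>) ` V"
      then show "\<sigma> \<in> {\<sigma>\<in>K. \<tau> \<subseteq> \<sigma> \<and> card \<sigma> = Suc (card \<tau>)}"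
        using ft unfolding V_def by auto
    qed
    moreover have "inj_on (\<lambda>v. insert v \<tau>) V" unfolding V_def inj_on_def by auto
    ultimately have "bd K c \<tau> = (\<Sum>v\<in>V. c (insert v \<tau>) * face_sign (insert v \<tau>) (the_elem (insert v \<tau> - \<tau>)))"
      unfolding bd_def using True by (simp add: sum.reindex)
    also have "\<dots> = (\<Sum>v\<in>V. c (insert v \<tau>) * face_sign (insert v \<tau>) v)"
      unfolding V_def by (intro sum.cong refl) (auto simp: insert_Diff_if)
    also have "\<dots> = bdU U c \<tau>"
      unfolding bdU_def
    proof (rule sum.mono_neutral_cong_left)
      show "finite (U - \<tau>)" using U by simp
      show "V \<subseteq> U - \<tau>" unfolding V_def by auto
      show "\<forall>i\<in>U - \<tau> - V. c (insert i \<tau>) * face_sign (insert i \<tau>) i = 0"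
        using c unfolding V_def chain_def by auto
    qed simp
    finally show ?thesis .
  next
    case False
    have "bdU U c \<tau> = 0"
      unfolding bdU_def
    proof (intro sum.neutral ballI)
      fix v assume "v \<in> U - \<tau>"
      show "c (insert v \<tau>) * face_sign (insert v \<tau>) v = 0"
      proof (rule ccontr)
        assume "\<not> ?thesis"
        then have "c (insert v \<tau>) \<noteq> 0" by auto
        then have i: "insert v \<tau> \<in> K" "card (insert v \<tau>) = Suc k" using c unfolding chain_def by auto
        have "\<tau> \<noteq> {}" using i k by auto
        then have "\<tau> \<in> K" using i K sc_closed by blast
        then show False using False by simp
      qed
    qed
    then show ?thesis using False unfolding bd_def by simp
  qed
qed



lemma smono_inj: "strict_mono (f::nat\<Rightarrow>nat) \<Longrightarrow> inj f"
  by (rule strict_mono_imp_inj_on)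

lemma smono_fs:
  assumes "strict_mono (f::nat \<Rightarrow> nat)"
  shows "face_sign (f ` I) (f k) = (-1) ^ card {x\<in>I. x < k}"
proof -
  have "{w\<in>f ` I. w < f k} = f ` {x\<in>I. x < k}"
    using assms by (auto simp: strict_mono_less)
  moreover have "card (f ` {x\<in>I. x < k}) = card {x\<in>I. x < k}"
    using smono_inj[OF assms] by (simp add: card_image inj_on_subset)
  ultimately show ?thesis unfolding face_sign_def by simp
qed

lemma inj_image_diff1: "inj f \<Longrightarrow> f ` I - {f k} = f ` (I - {k})"
  by (auto simp: inj_eq)

definition f1 :: "nat \<Rightarrow> nat \<Rightarrow> nat" where "f1 d k = (if k \<le> d then k else Suc k)"
definition f2 :: "nat \<Rightarrow> nat \<Rightarrow> nat" where "f2 d k = (if k \<le> 1 then k else if k \<le> d then Suc k else k + 2)"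

lemma f1_mono: "strict_mono (f1 d)"
  unfolding strict_mono_def f1_def by auto

lemma f2_mono: "strict_mono (f2 d)"
  unfolding strict_mono_def f2_def by auto

lemma f1_ne: "f1 d k \<noteq> Suc d"
  unfolding f1_def by auto

lemma f2_ne2: "2 \<le> d \<Longrightarrow> f2 d k \<noteq> 2" and f2_ne: "f2 d k \<noteq> d + 2"
  unfolding f2_def by auto

lemma f1_pos: "1 \<le> k \<Longrightarrow> 1 \<le> f1 d k" and f2_pos: "1 \<le> k \<Longrightarrow> 1 \<le> f2 d k"
  unfolding f1_def f2_def by auto

lemma ivl_diff_last: "{i..i+d} - {i+d} = {i..<i+(d::nat)}" by auto
lemma ivl_diff_first: "{i..i+d} - {i} = {Suc i..<Suc i+(d::nat)}" by auto

lemma card_below_last: "card {x\<in>{i..i+d}. x < i + d} = (d::nat)"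
proof -
  have "{x\<in>{i..i+d}. x < i + d} = {i..<i+d}" by auto
  then show ?thesis by simp
qed

lemma card_below_first: "card {x\<in>{i..i+d}. x < (i::nat)} = 0"
proof -
  have "{x\<in>{i..i+d}. x < i} = {}" by auto
  then show ?thesis by simp
qed

lemma ivl_sub: "1 \<le> d \<Longrightarrow> {j..<j+d} \<subseteq> {i..i+(d::nat)} \<longleftrightarrow> j = i \<or> j = Suc i"
proof
  assume d: "1 \<le> d" and s: "{j..<j+d} \<subseteq> {i..i+d}"
  have "j \<in> {j..<j+d}" "j + d - 1 \<in> {j..<j+d}" using d by auto
  then have "i \<le> j" "j + d - 1 \<le> i + d" using s by (auto simp del: atLeastLessThan_iff)
  then show "j = i \<or> j = Suc i" using d by linarith
qed auto



definition "W1 d i = f1 d ` {i..<i+d}"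
definition "W2 d i = f2 d ` {i..<i+d}"
definition "R1 d i = f1 d ` {i..i+d}"
definition "R2 d i = f2 d ` {i..i+d}"
definition "R0 d = {1..Suc d}"
definition "Aset d = {0..d}"
definition "Bset d = {Suc d..Suc (2*d)}"
definition "UU d = {..<2*d+2}"
definition "gens d = R1 d ` {1..d} \<union> R2 d ` {1..<d} \<union> {R0 d} \<union> (\<lambda>v. Bset d - {v}) ` Bset d"
definition "Kc d = {\<tau>. \<tau> \<noteq> {} \<and> (\<exists>\<sigma>\<in>gens d. \<tau> \<subseteq> \<sigma>)}"
definition "inS d H \<longleftrightarrow> (\<exists>i\<in>{1..Suc d}. H = W1 d i) \<or> (\<exists>i\<in>{1..d}. H = W2 d i)"
definition "Pc d = Kc d \<union> {insert 0 F | F. F \<in> Kc d \<and> (\<forall>H. inS d H \<longrightarrow> \<not> H \<subseteq> F)} \<union> {{0}}"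

locale dd =
  fixes d :: nat
  assumes d2: "2 \<le> d"

context dd
begin

lemma card_W1: "card (W1 d i) = d"
  unfolding W1_def using card_image[OF inj_on_subset[OF smono_inj[OF f1_mono] subset_UNIV]] by simp
lemma card_W2: "card (W2 d i) = d"
  unfolding W2_def using card_image[OF inj_on_subset[OF smono_inj[OF f2_mono] subset_UNIV]] by simp
lemma card_R1: "card (R1 d i) = Suc d"
  unfolding R1_def using card_image[OF inj_on_subset[OF smono_inj[OF f1_mono] subset_UNIV]] by simp
lemma card_R2: "card (R2 d i) = Suc d"
  unfolding R2_def using card_image[OF inj_on_subset[OF smono_inj[OF f2_mono] subset_UNIV]] by simp
lemma card_R0: "card (R0 d) = Suc d" unfolding R0_def by simp
lemma card_B: "card (Bset d) = Suc d" unfolding Bset_def by simp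
lemma card_A: "card (Aset d) = Suc d" unfolding Aset_def by simp

lemma gens_sub: "\<sigma> \<in> gens d \<Longrightarrow> \<sigma> \<subseteq> {1..Suc (2*d)}"
  unfolding gens_def R1_def R2_def R0_def Bset_def f1_def f2_def
  by (auto split: if_splits)

lemma gens_fin: "finite (gens d)" unfolding gens_def Bset_def by simp

lemma Kc_sub: "\<tau> \<in> Kc d \<Longrightarrow> \<tau> \<subseteq> {1..Suc (2*d)}"
  unfolding Kc_def using gens_sub by blast

lemma Kc_sc: "simplicial_complex (Kc d)"
proof -
  have "Kc d \<subseteq> Pow {1..Suc (2*d)}" using Kc_sub by blast
  then have "finite (Kc d)" by (rule finite_subset) simp
  moreover have "\<forall>\<sigma>\<in>Kc d. finite \<sigma> \<and> \<sigma> \<noteq> {}"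
  proof
    fix \<sigma> assume s: "\<sigma> \<in> Kc d"
    have "finite \<sigma>" using Kc_sub[OF s] finite_subset by blast
    moreover have "\<sigma> \<noteq> {}" using s unfolding Kc_def by blast
    ultimately show "finite \<sigma> \<and> \<sigma> \<noteq> {}" by blast
  qed
  moreover have "\<forall>\<sigma>\<in>Kc d. \<forall>\<tau>. \<tau> \<subseteq> \<sigma> \<and> \<tau> \<noteq> {} \<longrightarrow> \<tau> \<in> Kc d"
    unfolding Kc_def by blast
  ultimately show ?thesis unfolding simplicial_complex_def by blast
qed

lemma inS_card: "inS d H \<Longrightarrow> card H = d"
  unfolding inS_def using card_W1 card_W2 by auto

lemma Pc_cases: "\<sigma> \<in> Pc d \<Longrightarrow> (\<sigma> \<in> Kc d \<and> 0 \<notin> \<sigma>) \<or> \<sigma> = {0} \<or>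
   (\<exists>F. \<sigma> = insert 0 F \<and> 0 \<notin> F \<and> F \<in> Kc d \<and> (\<forall>H. inS d H \<longrightarrow> \<not> H \<subseteq> F))"
  unfolding Pc_def using Kc_sub by fastforce

lemma Pc_sub: "\<sigma> \<in> Pc d \<Longrightarrow> \<sigma> \<subseteq> UU d"
  using Pc_cases[of \<sigma>] Kc_sub unfolding UU_def by fastforce

lemma Pc_sc: "simplicial_complex (Pc d)"
proof -
  have "Pc d \<subseteq> Pow (UU d)" using Pc_sub by blast
  then have "finite (Pc d)" by (rule finite_subset) (simp add: UU_def)
  moreover have "\<forall>\<sigma>\<in>Pc d. finite \<sigma> \<and> \<sigma> \<noteq> {}"
  proof
    fix \<sigma> assume "\<sigma> \<in> Pc d"
    have "finite \<sigma>" using Pc_sub[OF \<open>\<sigma> \<in> Pc d\<close>] finite_subset unfolding UU_def by blast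
    moreover have "\<sigma> \<noteq> {}" using Pc_cases[OF \<open>\<sigma> \<in> Pc d\<close>] unfolding Kc_def by blast
    ultimately show "finite \<sigma> \<and> \<sigma> \<noteq> {}" by blast
  qed
  moreover have "\<forall>\<sigma>\<in>Pc d. \<forall>\<tau>. \<tau> \<subseteq> \<sigma> \<and> \<tau> \<noteq> {} \<longrightarrow> \<tau> \<in> Pc d"
  proof (intro ballI allI impI)
    fix \<sigma> \<tau> assume s: "\<sigma> \<in> Pc d" and t: "\<tau> \<subseteq> \<sigma> \<and> \<tau> \<noteq> {}"
    from Pc_cases[OF s] show "\<tau> \<in> Pc d"
    proof (elim disjE exE conjE)
      assume "\<sigma> \<in> Kc d" "0 \<notin> \<sigma>"
      then have "\<tau> \<in> Kc d" using t unfolding Kc_def by blast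
      then show ?thesis unfolding Pc_def by blast
    next
      assume "\<sigma> = {0}"
      then have "\<tau> = {0}" using t by blast
      then show ?thesis unfolding Pc_def by blast
    next
      fix F assume F: "\<sigma> = insert 0 F" "0 \<notin> F" "F \<in> Kc d" "\<forall>H. inS d H \<longrightarrow> \<not> H \<subseteq> F"
      show ?thesis
      proof (cases "0 \<in> \<tau>")
        case False
        then have "\<tau> \<subseteq> F" using t F by blast
        then have "\<tau> \<in> Kc d" using t F unfolding Kc_def by blast
        then show ?thesis unfolding Pc_def by blast
      next
        case True
        show ?thesis
        proof (cases "\<tau> = {0}")
          case True then show ?thesis unfolding Pc_def by blast
        next
          case False
          define G where "G = \<tau> - {0}"
          have "G \<subseteq> F" "G \<noteq> {}" "\<tau> = insert 0 G" using t F False True unfolding G_def by auto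
          then have "G \<in> Kc d" "\<forall>H. inS d H \<longrightarrow> \<not> H \<subseteq> G" using F unfolding Kc_def by blast+
          then show ?thesis using \<open>\<tau> = insert 0 G\<close> unfolding Pc_def by blast
        qed
      qed
    qed
  qed
  ultimately show ?thesis unfolding simplicial_complex_def by blast
qed

end


context dd
begin

lemma inj1: "inj (f1 d)" by (rule smono_inj[OF f1_mono])
lemma inj2: "inj (f2 d)" by (rule smono_inj[OF f2_mono])

lemma W1_R1: "W1 d j \<subseteq> R1 d i \<longleftrightarrow> j = i \<or> j = Suc i"
  unfolding W1_def R1_def using inj_image_subset_iff[OF inj1] ivl_sub[of d j i] d2 by simp
lemma W2_R2: "W2 d j \<subseteq> R2 d i \<longleftrightarrow> j = i \<or> j = Suc i"
  unfolding W2_def R2_def using inj_image_subset_iff[OF inj2] ivl_sub[of d j i] d2 by simp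

lemma W1_facet: "W1 d i = R1 d i - {f1 d (i+d)}" "W1 d (Suc i) = R1 d i - {f1 d i}"
  unfolding W1_def R1_def using inj_image_diff1[OF inj1] ivl_diff_last ivl_diff_first by metis+
lemma W2_facet: "W2 d i = R2 d i - {f2 d (i+d)}" "W2 d (Suc i) = R2 d i - {f2 d i}"
  unfolding W2_def R2_def using inj_image_diff1[OF inj2] ivl_diff_last ivl_diff_first by metis+

lemma emp_below: "{x\<in>{i..i+d}. x < (i::nat)} = {}" by auto
lemma fs_R1: "face_sign (R1 d i) (f1 d (i+d)) = (-1)^d" "face_sign (R1 d i) (f1 d i) = 1"
  unfolding R1_def smono_fs[OF f1_mono] card_below_last emp_below by simp_all
lemma fs_R2: "face_sign (R2 d i) (f2 d (i+d)) = (-1)^d" "face_sign (R2 d i) (f2 d i) = 1"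
  unfolding R2_def smono_fs[OF f2_mono] card_below_last emp_below by simp_all

lemma in_R1: "f1 d (i+d) \<in> R1 d i" "f1 d i \<in> R1 d i" unfolding R1_def by auto
lemma in_R2: "f2 d (i+d) \<in> R2 d i" "f2 d i \<in> R2 d i" unfolding R2_def by auto

lemma fin_R1: "finite (R1 d i)" unfolding R1_def by simp
lemma fin_R2: "finite (R2 d i)" unfolding R2_def by simp

lemma W2_has: "1 \<le> j \<Longrightarrow> j \<le> d \<Longrightarrow> Suc d \<in> W2 d j"
proof -
  assume "1 \<le> j" "j \<le> d"
  then have "d \<in> {j..<j+d}" by auto
  moreover have "f2 d d = Suc d" using d2 unfolding f2_def by simp
  ultimately show ?thesis unfolding W2_def by force
qed

lemma W2_not_R1: "1 \<le> j \<Longrightarrow> j \<le> d \<Longrightarrow> \<not> W2 d j \<subseteq> R1 d i"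
  using W2_has f1_ne unfolding R1_def by (metis imageE subsetD)

lemma W1_has: "1 \<le> j \<Longrightarrow> j \<le> Suc d \<Longrightarrow> 2 \<in> W1 d j \<or> d + 2 \<in> W1 d j"
proof -
  assume j: "1 \<le> j" "j \<le> Suc d"
  show ?thesis
  proof (cases "j = 1")
    case True
    have "2 \<in> {j..<j+d}" "f1 d 2 = 2" using True d2 unfolding f1_def by auto
    then show ?thesis unfolding W1_def by force
  next
    case False
    have "Suc d \<in> {j..<j+d}" "f1 d (Suc d) = d + 2" using False j d2 unfolding f1_def by auto
    then show ?thesis unfolding W1_def by force
  qed
qed

lemma W1_not_R2: "1 \<le> j \<Longrightarrow> j \<le> Suc d \<Longrightarrow> \<not> W1 d j \<subseteq> R2 d i"
proof
  assume j: "1 \<le> j" "j \<le> Suc d" and s: "W1 d j \<subseteq> R2 d i"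
  have "2 \<notin> R2 d i" unfolding R2_def using f2_ne2[OF d2] by auto
  moreover have "d + 2 \<notin> R2 d i"
  proof
    assume "d + 2 \<in> R2 d i"
    then obtain x where "d + 2 = f2 d x" unfolding R2_def by auto
    then show False using f2_ne[of d x] by simp
  qed
  ultimately have "2 \<notin> R2 d i" "d + 2 \<notin> R2 d i" by blast+
  then show False using W1_has[OF j] s by blast
qed

lemma W1_1: "W1 d 1 = {1..d}"
proof -
  have "W1 d 1 = f1 d ` {1..d}" unfolding W1_def by (simp add: atLeastLessThanSuc_atLeastAtMost)
  also have "\<dots> = {1..d}" unfolding f1_def by (auto simp: image_iff)
  finally show ?thesis .
qed

lemma W1_1': "W1 d (Suc 0) = {1..d}" using W1_1 by simp

lemma W2_1: "W2 d 1 = {1..Suc d} - {2}"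
proof -
  have "W2 d 1 = f2 d ` {1..d}" unfolding W2_def by (simp add: atLeastLessThanSuc_atLeastAtMost)
  also have "\<dots> = {1..Suc d} - {2}"
  proof
    show "f2 d ` {1..d} \<subseteq> {1..Suc d} - {2}" unfolding f2_def by auto
    show "{1..Suc d} - {2} \<subseteq> f2 d ` {1..d}"
    proof
      fix x assume x: "x \<in> {1..Suc d} - {2}"
      show "x \<in> f2 d ` {1..d}"
      proof (cases "x = 1")
        case True
        then show ?thesis using d2 unfolding f2_def by (auto intro!: image_eqI[of _ _ 1])
      next
        case False
        then have "f2 d (x - 1) = x" "x - 1 \<in> {1..d}" using x unfolding f2_def by auto
        then show ?thesis by force
      qed
    qed
  qed
  finally show ?thesis .
qed

lemma W2_1': "W2 d (Suc 0) = {1..Suc d} - {2}" using W2_1 by simp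

lemma W1_R0: "1 \<le> j \<Longrightarrow> j \<le> Suc d \<Longrightarrow> W1 d j \<subseteq> R0 d \<longleftrightarrow> j = 1"
proof
  assume j: "1 \<le> j" "j \<le> Suc d" and s: "W1 d j \<subseteq> R0 d"
  show "j = 1"
  proof (rule ccontr)
    assume "j \<noteq> 1"
    have "Suc d \<in> {j..<j+d}" "f1 d (Suc d) = d + 2" using \<open>j \<noteq> 1\<close> j d2 unfolding f1_def by auto
    then have "d + 2 \<in> W1 d j" unfolding W1_def by force
    then show False using s unfolding R0_def by auto
  qed
qed (auto simp: W1_1 W1_1' R0_def)

lemma W2_R0: "1 \<le> j \<Longrightarrow> j \<le> d \<Longrightarrow> W2 d j \<subseteq> R0 d \<longleftrightarrow> j = 1"
proof
  assume j: "1 \<le> j" "j \<le> d" and s: "W2 d j \<subseteq> R0 d"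
  show "j = 1"
  proof (rule ccontr)
    assume "j \<noteq> 1"
    have "j + d - 1 \<in> {j..<j+d}" "f2 d (j + d - 1) = j + d + 1" using \<open>j \<noteq> 1\<close> j d2 unfolding f2_def by auto
    then have "j + d + 1 \<in> W2 d j" unfolding W2_def by force
    then show False using s \<open>j \<noteq> 1\<close> j unfolding R0_def by auto
  qed
qed (auto simp: W2_1 W2_1' R0_def)

lemma R0_facets: "W1 d 1 = R0 d - {Suc d}" "W2 d 1 = R0 d - {2}"
  unfolding W1_1 W2_1 R0_def by auto

lemma fs_R0: "face_sign (R0 d) (Suc d) = (-1)^d" "face_sign (R0 d) 2 = -1"
proof -
  have e1: "{w\<in>R0 d. w < Suc d} = {1..d}" unfolding R0_def by auto
  show "face_sign (R0 d) (Suc d) = (-1)^d" unfolding face_sign_def e1 by simp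
  have e2: "{w\<in>R0 d. w < 2} = {1}" unfolding R0_def using d2 by auto
  show "face_sign (R0 d) 2 = -1" unfolding face_sign_def e2 by simp
qed

lemma W1_A: "1 \<le> j \<Longrightarrow> j \<le> Suc d \<Longrightarrow> W1 d j \<subseteq> Aset d \<longleftrightarrow> j = 1"
proof
  assume j: "1 \<le> j" "j \<le> Suc d" and s: "W1 d j \<subseteq> Aset d"
  show "j = 1"
  proof (rule ccontr)
    assume "j \<noteq> 1"
    have "Suc d \<in> {j..<j+d}" "f1 d (Suc d) = d + 2" using \<open>j \<noteq> 1\<close> j d2 unfolding f1_def by auto
    then have "d + 2 \<in> W1 d j" unfolding W1_def by force
    then show False using s unfolding Aset_def by auto
  qed
qed (auto simp: W1_1 W1_1' Aset_def)

lemma W2_not_A: "1 \<le> j \<Longrightarrow> j \<le> d \<Longrightarrow> \<not> W2 d j \<subseteq> Aset d"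
  using W2_has unfolding Aset_def by fastforce

lemma A_facet: "W1 d 1 = Aset d - {0}" unfolding W1_1 Aset_def by auto
lemma fs_A: "face_sign (Aset d) 0 = 1" by (rule fs_zero)

lemma W1_B: "1 \<le> j \<Longrightarrow> j \<le> Suc d \<Longrightarrow> W1 d j \<subseteq> Bset d \<longleftrightarrow> j = Suc d"
proof
  assume j: "1 \<le> j" "j \<le> Suc d" and s: "W1 d j \<subseteq> Bset d"
  show "j = Suc d"
  proof (rule ccontr)
    assume "j \<noteq> Suc d"
    then have "j \<in> {j..<j+d}" "f1 d j = j" using j d2 unfolding f1_def by auto
    then have "j \<in> W1 d j" unfolding W1_def by force
    then show False using s j \<open>j \<noteq> Suc d\<close> unfolding Bset_def by auto
  qed
next
  assume "j = Suc d"
  then show "W1 d j \<subseteq> Bset d" unfolding W1_def Bset_def f1_def by auto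
qed

lemma W2_B: "1 \<le> j \<Longrightarrow> j \<le> d \<Longrightarrow> W2 d j \<subseteq> Bset d \<longleftrightarrow> j = d"
proof
  assume j: "1 \<le> j" "j \<le> d" and s: "W2 d j \<subseteq> Bset d"
  show "j = d"
  proof (rule ccontr)
    assume "j \<noteq> d"
    then have "j \<in> {j..<j+d}" "f2 d j \<le> d" using j d2 unfolding f2_def by auto
    then have "f2 d j \<in> W2 d j" unfolding W2_def by force
    then show False using s \<open>f2 d j \<le> d\<close> unfolding Bset_def by auto
  qed
next
  assume "j = d"
  then show "W2 d j \<subseteq> Bset d" unfolding W2_def Bset_def f2_def using d2 by auto
qed

lemma B_facets: "W1 d (Suc d) = Bset d - {Suc d}" "W2 d d = Bset d - {d + 2}"
proof -
  have "f1 d ` {Suc d..<Suc d + d} = Bset d - {Suc d}"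
  proof
    show "f1 d ` {Suc d..<Suc d + d} \<subseteq> Bset d - {Suc d}" unfolding f1_def Bset_def by auto
    show "Bset d - {Suc d} \<subseteq> f1 d ` {Suc d..<Suc d + d}"
    proof
      fix x assume x: "x \<in> Bset d - {Suc d}"
      then have "f1 d (x - 1) = x" "x - 1 \<in> {Suc d..<Suc d + d}" unfolding f1_def Bset_def by auto
      then show "x \<in> f1 d ` {Suc d..<Suc d + d}" by force
    qed
  qed
  then show "W1 d (Suc d) = Bset d - {Suc d}" unfolding W1_def by simp
  have "f2 d ` {d..<d + d} = Bset d - {d + 2}"
  proof
    show "f2 d ` {d..<d + d} \<subseteq> Bset d - {d+2}" unfolding f2_def Bset_def using d2 by auto
    show "Bset d - {d+2} \<subseteq> f2 d ` {d..<d + d}"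
    proof
      fix x assume x: "x \<in> Bset d - {d+2}"
      show "x \<in> f2 d ` {d..<d + d}"
      proof (cases "x = Suc d")
        case True
        then have "f2 d d = x" using d2 unfolding f2_def by simp
        moreover have "d \<in> {d..<d+d}" using d2 by auto
        ultimately show ?thesis by (metis image_eqI)
      next
        case False
        then have "f2 d (x - 2) = x" "x - 2 \<in> {d..<d + d}" using x d2 unfolding f2_def Bset_def by auto
        then show ?thesis by force
      qed
    qed
  qed
  then show "W2 d d = Bset d - {d + 2}" unfolding W2_def by simp
qed

lemma fs_B: "face_sign (Bset d) (Suc d) = 1" "face_sign (Bset d) (d+2) = -1"
proof -
  have e1: "{w\<in>Bset d. w < Suc d} = {}" unfolding Bset_def by auto
  show "face_sign (Bset d) (Suc d) = 1" unfolding face_sign_def e1 by simp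
  have e2: "{w\<in>Bset d. w < d + 2} = {Suc d}" unfolding Bset_def by auto
  show "face_sign (Bset d) (d+2) = -1" unfolding face_sign_def e2 by simp
qed

end


definition "sg d = (-1::int) ^ Suc d"
definition "psi d z = (\<Sum>i\<in>{1..Suc d}. sg d ^ (i - 1) * z (W1 d i)) - (\<Sum>i\<in>{1..d}. sg d ^ i * z (W2 d i))"

lemma sum_pick2:
  fixes g :: "nat \<Rightarrow> int"
  assumes "finite J" "a \<in> J" "b \<in> J" "a \<noteq> b"
    "\<And>j. j \<in> J \<Longrightarrow> g j = (if j = a then x else if j = b then y else 0)"
  shows "sum g J = x + y"
proof -
  have "sum g J = (\<Sum>j\<in>J. (if j = a then x else 0) + (if j = b then y else 0))"
    using assms(4,5) by (intro sum.cong refl) auto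
  also have "\<dots> = x + y" using assms(1-3) by (simp add: sum.distrib)
  finally show ?thesis .
qed

lemma sum_pick1:
  fixes g :: "nat \<Rightarrow> int"
  assumes "finite J" "a \<in> J" "\<And>j. j \<in> J \<Longrightarrow> g j = (if j = a then x else 0)"
  shows "sum g J = x"
proof -
  have "sum g J = (\<Sum>j\<in>J. (if j = a then x else 0))"
    using assms(3) by (intro sum.cong refl) auto
  also have "\<dots> = x" using assms(1-2) by simp
  finally show ?thesis .
qed

lemma sum_swap_mult:
  fixes c :: "nat \<Rightarrow> int"
  shows "(\<Sum>i\<in>J. c i * (\<Sum>\<sigma>\<in>I. k \<sigma> * g \<sigma> i)) = (\<Sum>\<sigma>\<in>I. k \<sigma> * (\<Sum>i\<in>J. c i * g \<sigma> i))"
  by (simp add: sum_distrib_left sum.swap[of _ I] mult.left_commute)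

lemma psi_linear:
  "psi d (\<lambda>\<tau>. \<Sum>\<sigma>\<in>I. k \<sigma> * g \<sigma> \<tau>) = (\<Sum>\<sigma>\<in>I. k \<sigma> * psi d (g \<sigma>))"
proof -
  have a: "(\<Sum>i\<in>{1..Suc d}. sg d ^ (i - 1) * (\<Sum>\<sigma>\<in>I. k \<sigma> * g \<sigma> (W1 d i)))
     = (\<Sum>\<sigma>\<in>I. k \<sigma> * (\<Sum>i\<in>{1..Suc d}. sg d ^ (i - 1) * g \<sigma> (W1 d i)))"
    by (rule sum_swap_mult)
  have b: "(\<Sum>i\<in>{1..d}. sg d ^ i * (\<Sum>\<sigma>\<in>I. k \<sigma> * g \<sigma> (W2 d i)))
     = (\<Sum>\<sigma>\<in>I. k \<sigma> * (\<Sum>i\<in>{1..d}. sg d ^ i * g \<sigma> (W2 d i)))"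
    by (rule sum_swap_mult)
  show ?thesis unfolding psi_def a b by (simp add: sum_subtractf right_diff_distrib)
qed

lemma psi_comb:
  "psi d (\<lambda>\<tau>. a * x \<tau> + b * y \<tau>) = a * psi d x + b * psi d y"
proof -
  have a: "\<And>J c. (\<Sum>i\<in>J. (c i::int) * (a * x (W1 d i) + b * y (W1 d i))) = a * (\<Sum>i\<in>J. c i * x (W1 d i)) + b * (\<Sum>i\<in>J. c i * y (W1 d i))"
    by (simp add: sum.distrib sum_distrib_left distrib_left mult.left_commute)
  have b: "\<And>J c. (\<Sum>i\<in>J. (c i::int) * (a * x (W2 d i) + b * y (W2 d i))) = a * (\<Sum>i\<in>J. c i * x (W2 d i)) + b * (\<Sum>i\<in>J. c i * y (W2 d i))"
    by (simp add: sum.distrib sum_distrib_left distrib_left mult.left_commute)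
  show ?thesis unfolding psi_def a b by (simp add: algebra_simps)
qed

context dd
begin

lemma sg_step: "1 \<le> i \<Longrightarrow> sg d ^ i = - ((-1)^d * sg d ^ (i - 1))"
proof -
  assume "1 \<le> i"
  then have "i = Suc (i - 1)" by simp
  then have "sg d ^ i = sg d * sg d ^ (i - 1)" by (metis power_Suc)
  then show ?thesis unfolding sg_def by simp
qed

lemma sg_even: "sg d ^ d = 1"
proof -
  have "sg d ^ d = (-1) ^ (Suc d * d)" by (simp only: sg_def power_mult)
  moreover have "even (Suc d * d)" by simp
  ultimately show ?thesis by simp
qed

lemma psi_R1: "1 \<le> i \<Longrightarrow> i \<le> d \<Longrightarrow> psi d (sb (R1 d i)) = 0"
proof -
  assume i: "1 \<le> i" "i \<le> d"
  have a: "(\<Sum>j\<in>{1..Suc d}. sg d ^ (j - 1) * sb (R1 d i) (W1 d j)) = sg d ^ (i - 1) * (-1)^d + sg d ^ i * 1"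
  proof (rule sum_pick2[of _ i "Suc i"])
    fix j assume j: "j \<in> {1..Suc d}"
    show "sg d ^ (j - 1) * sb (R1 d i) (W1 d j) =
      (if j = i then sg d ^ (i - 1) * (-1)^d else if j = Suc i then sg d ^ i * 1 else 0)"
    proof (cases "j = i \<or> j = Suc i")
      case True
      then show ?thesis
        using sb_facet[OF fin_R1 in_R1(1)] sb_facet[OF fin_R1 in_R1(2)] W1_facet fs_R1 d2 by auto
    next
      case False
      then have "\<not> W1 d j \<subseteq> R1 d i" using W1_R1 by blast
      then show ?thesis using False sb_nonfacet fin_R1 by auto
    qed
  qed (use i in auto)
  have b: "(\<Sum>j\<in>{1..d}. sg d ^ j * sb (R1 d i) (W2 d j)) = 0"
  proof (intro sum.neutral ballI)
    fix j assume "j \<in> {1..d}"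
    then have "\<not> W2 d j \<subseteq> R1 d i" using W2_not_R1 by auto
    then show "sg d ^ j * sb (R1 d i) (W2 d j) = 0" using sb_nonfacet fin_R1 by auto
  qed
  show ?thesis unfolding psi_def a b using sg_step[OF i(1)] by simp
qed

lemma psi_R2: "1 \<le> i \<Longrightarrow> i < d \<Longrightarrow> psi d (sb (R2 d i)) = 0"
proof -
  assume i: "1 \<le> i" "i < d"
  have a: "(\<Sum>j\<in>{1..d}. sg d ^ j * sb (R2 d i) (W2 d j)) = sg d ^ i * (-1)^d + sg d ^ Suc i * 1"
  proof (rule sum_pick2[of _ i "Suc i"])
    fix j assume j: "j \<in> {1..d}"
    show "sg d ^ j * sb (R2 d i) (W2 d j) =
      (if j = i then sg d ^ i * (-1)^d else if j = Suc i then sg d ^ Suc i * 1 else 0)"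
    proof (cases "j = i \<or> j = Suc i")
      case True
      then show ?thesis
        using sb_facet[OF fin_R2 in_R2(1)] sb_facet[OF fin_R2 in_R2(2)] W2_facet fs_R2 d2 by auto
    next
      case False
      then have "\<not> W2 d j \<subseteq> R2 d i" using W2_R2 by blast
      then show ?thesis using False sb_nonfacet fin_R2 by auto
    qed
  qed (use i in auto)
  have b: "(\<Sum>j\<in>{1..Suc d}. sg d ^ (j - 1) * sb (R2 d i) (W1 d j)) = 0"
  proof (intro sum.neutral ballI)
    fix j assume "j \<in> {1..Suc d}"
    then have "\<not> W1 d j \<subseteq> R2 d i" using W1_not_R2 by auto
    then show "sg d ^ (j - 1) * sb (R2 d i) (W1 d j) = 0" using sb_nonfacet fin_R2 by auto
  qed
  have "sg d ^ Suc i = - ((-1)^d * sg d ^ i)" using sg_step[of "Suc i"] by simp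
  then show ?thesis unfolding psi_def a b by simp
qed

lemma fin_R0: "finite (R0 d)" unfolding R0_def by simp
lemma in_R0: "Suc d \<in> R0 d" "2 \<in> R0 d" unfolding R0_def using d2 by auto

lemma psi_R0: "psi d (sb (R0 d)) = 0"
proof -
  have a: "(\<Sum>j\<in>{1..Suc d}. sg d ^ (j - 1) * sb (R0 d) (W1 d j)) = (-1)^d"
  proof (rule sum_pick1[of _ 1])
    fix j assume j: "j \<in> {1..Suc d}"
    show "sg d ^ (j - 1) * sb (R0 d) (W1 d j) = (if j = 1 then (-1)^d else 0)"
    proof (cases "j = 1")
      case True
      then show ?thesis using sb_facet[OF fin_R0 in_R0(1)] R0_facets fs_R0 by simp
    next
      case False
      then have "\<not> W1 d j \<subseteq> R0 d" using W1_R0 j by auto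
      then show ?thesis using False sb_nonfacet fin_R0 by auto
    qed
  qed auto
  have b: "(\<Sum>j\<in>{1..d}. sg d ^ j * sb (R0 d) (W2 d j)) = sg d * (-1)"
  proof (rule sum_pick1[of _ 1])
    fix j assume j: "j \<in> {1..d}"
    show "sg d ^ j * sb (R0 d) (W2 d j) = (if j = 1 then sg d * (-1) else 0)"
    proof (cases "j = 1")
      case True
      then show ?thesis using sb_facet[OF fin_R0 in_R0(2)] R0_facets fs_R0 by simp
    next
      case False
      then have "\<not> W2 d j \<subseteq> R0 d" using W2_R0 j by auto
      then show ?thesis using False sb_nonfacet fin_R0 by auto
    qed
  qed (use d2 in auto)
  show ?thesis unfolding psi_def a b by (simp add: sg_def)
qed

lemma W_pos1: "1 \<le> j \<Longrightarrow> 0 \<notin> W1 d j"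
proof
  assume "1 \<le> j" "0 \<in> W1 d j"
  then obtain k where "k \<in> {j..<j+d}" "f1 d k = 0" unfolding W1_def by auto
  then show False using f1_pos[of k d] \<open>1 \<le> j\<close> by auto
qed
lemma W_pos2: "1 \<le> j \<Longrightarrow> 0 \<notin> W2 d j"
proof
  assume "1 \<le> j" "0 \<in> W2 d j"
  then obtain k where "k \<in> {j..<j+d}" "f2 d k = 0" unfolding W2_def by auto
  then show False using f2_pos[of k d] \<open>1 \<le> j\<close> by auto
qed

lemma inS_pos: "inS d H \<Longrightarrow> 0 \<notin> H"
  unfolding inS_def using W_pos1 W_pos2 by auto

lemma psi_cone:
  assumes "0 \<notin> F" "finite F" "\<forall>H. inS d H \<longrightarrow> \<not> H \<subseteq> F"
  shows "psi d (sb (insert 0 F)) = 0"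
proof -
  have z: "sb (insert 0 F) H = 0" if "inS d H" for H
  proof (rule sb_nonfacet)
    show "finite (insert 0 F)" using assms by simp
    show "\<not> (H \<subseteq> insert 0 F \<and> Suc (card H) = card (insert 0 F))"
      using inS_pos[OF that] assms that by auto
  qed
  have "\<And>j. j \<in> {1..Suc d} \<Longrightarrow> inS d (W1 d j)" "\<And>j. j \<in> {1..d} \<Longrightarrow> inS d (W2 d j)"
    unfolding inS_def by auto
  then show ?thesis unfolding psi_def using z by simp
qed

lemma fin_A: "finite (Aset d)" unfolding Aset_def by simp
lemma fin_B: "finite (Bset d)" unfolding Bset_def by simp

lemma psi_A: "psi d (sb (Aset d)) = 1"
proof -
  have a: "(\<Sum>j\<in>{1..Suc d}. sg d ^ (j - 1) * sb (Aset d) (W1 d j)) = 1"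
  proof (rule sum_pick1[of _ 1])
    fix j assume j: "j \<in> {1..Suc d}"
    show "sg d ^ (j - 1) * sb (Aset d) (W1 d j) = (if j = 1 then 1 else 0)"
    proof (cases "j = 1")
      case True
      have "0 \<in> Aset d" unfolding Aset_def by simp
      then show ?thesis using True sb_facet[OF fin_A, of 0] A_facet fs_A by simp
    next
      case False
      then have "\<not> W1 d j \<subseteq> Aset d" using W1_A j by auto
      then show ?thesis using False sb_nonfacet fin_A by auto
    qed
  qed auto
  have b: "(\<Sum>j\<in>{1..d}. sg d ^ j * sb (Aset d) (W2 d j)) = 0"
  proof (intro sum.neutral ballI)
    fix j assume "j \<in> {1..d}"
    then have "\<not> W2 d j \<subseteq> Aset d" using W2_not_A by auto
    then show "sg d ^ j * sb (Aset d) (W2 d j) = 0" using sb_nonfacet fin_A by auto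
  qed
  show ?thesis unfolding psi_def a b by simp
qed

lemma psi_B: "psi d (sb (Bset d)) = 2"
proof -
  have a: "(\<Sum>j\<in>{1..Suc d}. sg d ^ (j - 1) * sb (Bset d) (W1 d j)) = sg d ^ d"
  proof (rule sum_pick1[of _ "Suc d"])
    fix j assume j: "j \<in> {1..Suc d}"
    show "sg d ^ (j - 1) * sb (Bset d) (W1 d j) = (if j = Suc d then sg d ^ d else 0)"
    proof (cases "j = Suc d")
      case True
      have "Suc d \<in> Bset d" unfolding Bset_def by simp
      then show ?thesis using True sb_facet[OF fin_B, of "Suc d"] B_facets fs_B by simp
    next
      case False
      then have "\<not> W1 d j \<subseteq> Bset d" using W1_B j by auto
      then show ?thesis using False sb_nonfacet fin_B by auto
    qed
  qed auto
  have b: "(\<Sum>j\<in>{1..d}. sg d ^ j * sb (Bset d) (W2 d j)) = sg d ^ d * (-1)"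
  proof (rule sum_pick1[of _ d])
    fix j assume j: "j \<in> {1..d}"
    show "sg d ^ j * sb (Bset d) (W2 d j) = (if j = d then sg d ^ d * (-1) else 0)"
    proof (cases "j = d")
      case True
      have "d + 2 \<in> Bset d" unfolding Bset_def using d2 by simp
      then show ?thesis using True sb_facet[OF fin_B, of "d+2"] B_facets fs_B by simp
    next
      case False
      then have "\<not> W2 d j \<subseteq> Bset d" using W2_B j by auto
      then show ?thesis using False sb_nonfacet fin_B by auto
    qed
  qed (use d2 in auto)
  show ?thesis unfolding psi_def a b sg_even by simp
qed

end


definition "Bd d x \<longleftrightarrow> (\<exists>c. chain (Pc d) d c \<and> x = bdU (UU d) c)"

lemma chain_add: "chain K k a \<Longrightarrow> chain K k b \<Longrightarrow> chain K k (\<lambda>\<sigma>. a \<sigma> + b \<sigma>)"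
  unfolding chain_def by (metis add.right_neutral)
lemma chain_scale: "chain K k a \<Longrightarrow> chain K k (\<lambda>\<sigma>. m * a \<sigma>)"
  unfolding chain_def by auto
lemma chain_zero: "chain K k (\<lambda>_. 0)"
  unfolding chain_def by auto
lemma chain_sum: "\<forall>i\<in>I. chain K k (f i) \<Longrightarrow> chain K k (\<lambda>\<sigma>. \<Sum>i\<in>I. f i \<sigma>)"
  unfolding chain_def by (metis (mono_tags, lifting) sum.neutral)
lemma chain_ind: "\<sigma> \<in> K \<Longrightarrow> card \<sigma> = Suc k \<Longrightarrow> chain K k (ind \<sigma>)"
  unfolding chain_def ind_def by auto

context dd
begin

lemma UU_fin: "finite (UU d)" unfolding UU_def by simp
lemma UU_0: "0 \<in> UU d" unfolding UU_def by simp

lemma Bd_zero: "Bd d (\<lambda>_. 0)"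
  unfolding Bd_def using chain_zero bdU_zero by (intro exI[of _ "\<lambda>_. 0"]) simp

lemma Bd_add: "Bd d x \<Longrightarrow> Bd d y \<Longrightarrow> Bd d (\<lambda>\<tau>. x \<tau> + y \<tau>)"
proof -
  assume "Bd d x" "Bd d y"
  then obtain a b where "chain (Pc d) d a" "x = bdU (UU d) a" "chain (Pc d) d b" "y = bdU (UU d) b"
    unfolding Bd_def by blast
  then show ?thesis unfolding Bd_def using chain_add bdU_add by (intro exI[of _ "\<lambda>\<sigma>. a \<sigma> + b \<sigma>"]) simp
qed

lemma Bd_scale: "Bd d x \<Longrightarrow> Bd d (\<lambda>\<tau>. m * x \<tau>)"
proof -
  assume "Bd d x"
  then obtain a where "chain (Pc d) d a" "x = bdU (UU d) a"
    unfolding Bd_def by blast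
  then show ?thesis unfolding Bd_def using chain_scale bdU_scale by (intro exI[of _ "\<lambda>\<sigma>. m * a \<sigma>"]) simp
qed

lemma Bd_diff: "Bd d x \<Longrightarrow> Bd d y \<Longrightarrow> Bd d (\<lambda>\<tau>. x \<tau> - m * y \<tau>)"
proof -
  assume "Bd d x" "Bd d y"
  then have "Bd d (\<lambda>\<tau>. x \<tau> + (- m) * y \<tau>)" using Bd_add Bd_scale by blast
  then show ?thesis by simp
qed

lemma Bd_sum:
  assumes "\<forall>i\<in>I. Bd d (f i)"
  shows "Bd d (\<lambda>\<tau>. \<Sum>i\<in>I. f i \<tau>)"
proof -
  have "\<exists>c. \<forall>i\<in>I. chain (Pc d) d (c i) \<and> f i = bdU (UU d) (c i)"
    using assms unfolding Bd_def by (rule bchoice)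
  then obtain c where c: "\<forall>i\<in>I. chain (Pc d) d (c i) \<and> f i = bdU (UU d) (c i)" by blast
  have "chain (Pc d) d (\<lambda>\<sigma>. \<Sum>i\<in>I. c i \<sigma>)" by (rule chain_sum) (use c in blast)
  moreover have "(\<lambda>\<tau>. \<Sum>i\<in>I. f i \<tau>) = bdU (UU d) (\<lambda>\<sigma>. \<Sum>i\<in>I. c i \<sigma>)"
    unfolding bdU_sum
  proof (intro ext sum.cong refl)
    fix \<tau> i assume "i \<in> I"
    then have "f i = bdU (UU d) (c i)" using c by blast
    then show "f i \<tau> = bdU (UU d) (c i) \<tau>" by simp
  qed
  ultimately show ?thesis unfolding Bd_def by blast
qed

lemma Bd_cong: "Bd d x \<Longrightarrow> (\<And>\<tau>. x \<tau> = y \<tau>) \<Longrightarrow> Bd d y"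
proof -
  assume "Bd d x" "\<And>\<tau>. x \<tau> = y \<tau>"
  then have "x = y" by blast
  then show "Bd d y" using \<open>Bd d x\<close> by simp
qed

lemma Bd_sb: "\<sigma> \<in> Pc d \<Longrightarrow> card \<sigma> = Suc d \<Longrightarrow> Bd d (sb \<sigma>)"
  unfolding Bd_def using chain_ind bdU_ind[OF UU_fin Pc_sub] by (intro exI[of _ "ind \<sigma>"]) simp

lemma Pd_cases:
  assumes "\<sigma> \<in> Pc d" "card \<sigma> = Suc d"
  shows "(\<exists>i\<in>{1..d}. \<sigma> = R1 d i) \<or> (\<exists>i\<in>{1..<d}. \<sigma> = R2 d i) \<or> \<sigma> = R0 d \<or>
    (\<exists>F. \<sigma> = insert 0 F \<and> 0 \<notin> F \<and> F \<in> Kc d \<and> (\<forall>H. inS d H \<longrightarrow> \<not> H \<subseteq> F))"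
proof -
  have Kcase: "(\<exists>i\<in>{1..d}. \<tau> = R1 d i) \<or> (\<exists>i\<in>{1..<d}. \<tau> = R2 d i) \<or> \<tau> = R0 d"
    if t: "\<tau> \<in> Kc d" "card \<tau> = Suc d" for \<tau>
  proof -
    obtain g where g: "g \<in> gens d" "\<tau> \<subseteq> g" using t unfolding Kc_def by blast
    have fg: "finite g" using gens_sub[OF g(1)] by (rule finite_subset) simp
    from g(1) consider (a) "g \<in> R1 d ` {1..d}" | (b) "g \<in> R2 d ` {1..<d}" | (c) "g = R0 d"
      | (e) v where "v \<in> Bset d" "g = Bset d - {v}" unfolding gens_def by blast
    then have gg: "g \<in> R1 d ` {1..d} \<union> R2 d ` {1..<d} \<union> {R0 d}"
    proof cases
      case e
      then have "card g = d" using card_B fin_B by simp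
      then show ?thesis using card_mono[OF fg g(2)] t by simp
    qed auto
    then have "card g = Suc d" using card_R1 card_R2 card_R0 by auto
    then have "\<tau> = g" using card_subset_eq[OF fg g(2)] t by simp
    moreover note gg
    ultimately show ?thesis by auto
  qed
  from Pc_cases[OF assms(1)] show ?thesis
  proof (elim disjE)
    assume "\<sigma> \<in> Kc d \<and> 0 \<notin> \<sigma>"
    then show ?thesis using Kcase assms(2) by blast
  next
    assume "\<sigma> = {0}"
    then show ?thesis using assms(2) d2 by simp
  next
    assume "\<exists>F. \<sigma> = insert 0 F \<and> 0 \<notin> F \<and> F \<in> Kc d \<and> (\<forall>H. inS d H \<longrightarrow> \<not> H \<subseteq> F)"
    then show ?thesis by (intro disjI2)
  qed
qed

lemma inS_K: "\<forall>H. inS d H \<longrightarrow> \<not> H \<subseteq> F \<Longrightarrow> F \<in> Kc d \<Longrightarrow> finite F" 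
  using Kc_sub by (meson finite_atLeastAtMost finite_subset)

lemma psi_sb_zero:
  assumes "\<sigma> \<in> Pc d" "card \<sigma> = Suc d"
  shows "psi d (sb \<sigma>) = 0"
  using Pd_cases[OF assms]
proof (elim disjE bexE exE conjE)
  fix i assume "i \<in> {1..d}" "\<sigma> = R1 d i" then show ?thesis using psi_R1 by simp
next
  fix i assume "i \<in> {1..<d}" "\<sigma> = R2 d i" then show ?thesis using psi_R2 by simp
next
  assume "\<sigma> = R0 d" then show ?thesis using psi_R0 by simp
next
  fix F assume "\<sigma> = insert 0 F" "0 \<notin> F" "F \<in> Kc d" "\<forall>H. inS d H \<longrightarrow> \<not> H \<subseteq> F"
  then show ?thesis using psi_cone inS_K by simp
qed

lemma psi_bd:
  assumes c: "chain (Pc d) d c"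
  shows "psi d (bdU (UU d) c) = 0"
proof -
  define Pd where "Pd = {\<sigma>\<in>Pc d. card \<sigma> = Suc d}"
  have fPd: "finite Pd" unfolding Pd_def using Pc_sc unfolding simplicial_complex_def by auto
  have "c = (\<lambda>\<tau>. \<Sum>\<sigma>\<in>Pd. c \<sigma> * ind \<sigma> \<tau>)"
  proof
    fix \<tau>
    show "c \<tau> = (\<Sum>\<sigma>\<in>Pd. c \<sigma> * ind \<sigma> \<tau>)"
    proof (cases "\<tau> \<in> Pd")
      case True
      have "(\<Sum>\<sigma>\<in>Pd. c \<sigma> * ind \<sigma> \<tau>) = (\<Sum>\<sigma>\<in>Pd. if \<sigma> = \<tau> then c \<tau> else 0)"
        unfolding ind_def by (intro sum.cong refl) auto
      then show ?thesis using True fPd by simp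
    next
      case False
      then have "c \<tau> = 0" using c unfolding chain_def Pd_def by auto
      moreover have "(\<Sum>\<sigma>\<in>Pd. c \<sigma> * ind \<sigma> \<tau>) = 0"
        using False unfolding ind_def by (intro sum.neutral) auto
      ultimately show ?thesis by simp
    qed
  qed
  then have "bdU (UU d) c = (\<lambda>\<tau>. \<Sum>\<sigma>\<in>Pd. c \<sigma> * sb \<sigma> \<tau>)"
  proof -
    assume e: "c = (\<lambda>\<tau>. \<Sum>\<sigma>\<in>Pd. c \<sigma> * ind \<sigma> \<tau>)"
    have "bdU (UU d) (\<lambda>\<tau>. \<Sum>\<sigma>\<in>Pd. c \<sigma> * ind \<sigma> \<tau>) = (\<lambda>\<tau>. \<Sum>\<sigma>\<in>Pd. bdU (UU d) (\<lambda>x. c \<sigma> * ind \<sigma> x) \<tau>)"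
      by (rule bdU_sum)
    also have "\<dots> = (\<lambda>\<tau>. \<Sum>\<sigma>\<in>Pd. c \<sigma> * sb \<sigma> \<tau>)"
    proof (intro ext sum.cong refl)
      fix \<tau> \<sigma> assume "\<sigma> \<in> Pd"
      then have "\<sigma> \<subseteq> UU d" using Pc_sub unfolding Pd_def by auto
      then show "bdU (UU d) (\<lambda>x. c \<sigma> * ind \<sigma> x) \<tau> = c \<sigma> * sb \<sigma> \<tau>"
        using bdU_scale[of "UU d" "c \<sigma>" "ind \<sigma>"] bdU_ind[OF UU_fin] by simp
    qed
    finally show ?thesis using e by simp
  qed
  then have "psi d (bdU (UU d) c) = (\<Sum>\<sigma>\<in>Pd. c \<sigma> * psi d (sb \<sigma>))"
    using psi_linear[of d c sb Pd] by simp
  also have "\<dots> = 0" using psi_sb_zero unfolding Pd_def by simp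
  finally show ?thesis .
qed

lemma Bd_psi: "Bd d x \<Longrightarrow> psi d x = 0"
  unfolding Bd_def using psi_bd by blast

end


lemma diff_single_eq: "v \<in> S \<Longrightarrow> x \<in> S \<Longrightarrow> S - {v} = S - {x} \<Longrightarrow> v = x"
  by blast

lemma ind_ins: "0 \<notin> W \<Longrightarrow> 0 \<notin> G \<Longrightarrow> ind (insert 0 W) (insert 0 G) = (if G = W then 1 else 0)"
  unfolding ind_def by (metis insert_Diff1 Diff_insert_absorb singletonI)

context dd
begin

lemma sb_cone:
  assumes "\<sigma> \<subseteq> UU d" "finite \<sigma>" "0 \<notin> \<sigma>"
  shows "sb \<sigma> = (\<lambda>\<tau>. \<Sum>v\<in>\<sigma>. face_sign \<sigma> v * sb (insert 0 (\<sigma> - {v})) \<tau>)"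
proof -
  have cyc: "bdU (UU d) (sb \<sigma>) = (\<lambda>_. 0)"
    using bdU_ind[OF UU_fin assms(1)] bdU_bdU[OF UU_fin] by metis
  have hc: "hc (sb \<sigma>) = (\<lambda>X. \<Sum>v\<in>\<sigma>. face_sign \<sigma> v * ind (insert 0 (\<sigma> - {v})) X)"
  proof
    fix X
    have "hc (sb \<sigma>) X = (\<Sum>v\<in>\<sigma>. if 0 \<in> X \<and> X - {0} = \<sigma> - {v} then face_sign \<sigma> v else 0)"
      unfolding hc_def sb_def by (cases "0 \<in> X") auto
    also have "\<dots> = (\<Sum>v\<in>\<sigma>. face_sign \<sigma> v * ind (insert 0 (\<sigma> - {v})) X)"
    proof (intro sum.cong refl)
      fix v assume "v \<in> \<sigma>"
      have "(0 \<in> X \<and> X - {0} = \<sigma> - {v}) \<longleftrightarrow> X = insert 0 (\<sigma> - {v})"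
        using assms(3) by auto
      then show "(if 0 \<in> X \<and> X - {0} = \<sigma> - {v} then face_sign \<sigma> v else 0) =
          face_sign \<sigma> v * ind (insert 0 (\<sigma> - {v})) X" unfolding ind_def by simp
    qed
    finally show "hc (sb \<sigma>) X = (\<Sum>v\<in>\<sigma>. face_sign \<sigma> v * ind (insert 0 (\<sigma> - {v})) X)" .
  qed
  have "sb \<sigma> = bdU (UU d) (hc (sb \<sigma>))" using cone[OF UU_fin UU_0 cyc] by simp
  also have "\<dots> = (\<lambda>\<tau>. \<Sum>v\<in>\<sigma>. bdU (UU d) (\<lambda>X. face_sign \<sigma> v * ind (insert 0 (\<sigma> - {v})) X) \<tau>)"
    unfolding hc by (rule bdU_sum)
  also have "\<dots> = (\<lambda>\<tau>. \<Sum>v\<in>\<sigma>. face_sign \<sigma> v * sb (insert 0 (\<sigma> - {v})) \<tau>)"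
  proof (intro ext sum.cong refl)
    fix \<tau> v assume "v \<in> \<sigma>"
    have "insert 0 (\<sigma> - {v}) \<subseteq> UU d" using assms(1) UU_0 by auto
    then show "bdU (UU d) (\<lambda>X. face_sign \<sigma> v * ind (insert 0 (\<sigma> - {v})) X) \<tau> =
        face_sign \<sigma> v * sb (insert 0 (\<sigma> - {v})) \<tau>"
      using bdU_scale[of "UU d" "face_sign \<sigma> v" "ind (insert 0 (\<sigma> - {v}))"] bdU_ind[OF UU_fin] by simp
  qed
  finally show ?thesis .
qed

lemma rel2:
  assumes s: "\<sigma> \<in> Kc d" "card \<sigma> = Suc d" and xy: "x \<in> \<sigma>" "y \<in> \<sigma>" "x \<noteq> y"
    and oth: "\<And>v. v \<in> \<sigma> \<Longrightarrow> v \<noteq> x \<Longrightarrow> v \<noteq> y \<Longrightarrow> \<not> inS d (\<sigma> - {v})"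
  shows "Bd d (\<lambda>\<tau>. face_sign \<sigma> x * sb (insert 0 (\<sigma> - {x})) \<tau> + face_sign \<sigma> y * sb (insert 0 (\<sigma> - {y})) \<tau>)"
proof -
  have sub: "\<sigma> \<subseteq> UU d" using Kc_sub[OF s(1)] unfolding UU_def by auto
  have z: "0 \<notin> \<sigma>" using Kc_sub[OF s(1)] by auto
  have fs: "finite \<sigma>" using Kc_sub[OF s(1)] by (rule finite_subset) simp
  have sP: "\<sigma> \<in> Pc d" using s(1) unfolding Pc_def by blast
  define T where "T v \<tau> = face_sign \<sigma> v * sb (insert 0 (\<sigma> - {v})) \<tau>" for v \<tau>
  have split: "(\<Sum>v\<in>\<sigma>. T v \<tau>) = T x \<tau> + T y \<tau> + (\<Sum>v\<in>\<sigma> - {x} - {y}. T v \<tau>)" for \<tau>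
  proof -
    have "(\<Sum>v\<in>\<sigma>. T v \<tau>) = T x \<tau> + (\<Sum>v\<in>\<sigma> - {x}. T v \<tau>)" using fs xy by (simp add: sum.remove)
    also have "(\<Sum>v\<in>\<sigma> - {x}. T v \<tau>) = T y \<tau> + (\<Sum>v\<in>\<sigma> - {x} - {y}. T v \<tau>)"
      using fs xy by (intro sum.remove) auto
    finally show ?thesis by simp
  qed
  have rest: "Bd d (\<lambda>\<tau>. \<Sum>v\<in>\<sigma> - {x} - {y}. T v \<tau>)"
  proof (rule Bd_sum, intro ballI)
    fix v assume v: "v \<in> \<sigma> - {x} - {y}"
    have cv: "card (\<sigma> - {v}) = d" using s(2) v fs by simp
    have "\<sigma> - {v} \<in> Kc d"
    proof -
      have "\<sigma> - {v} \<noteq> {}"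
      proof
        assume "\<sigma> - {v} = {}"
        then have "card (\<sigma> - {v}) = 0" by (simp only: card.empty)
        then show False using cv d2 by simp
      qed
      then show ?thesis using s(1) unfolding Kc_def by blast
    qed
    moreover have "\<forall>H. inS d H \<longrightarrow> \<not> H \<subseteq> \<sigma> - {v}"
    proof (intro allI impI notI)
      fix H assume H: "inS d H" "H \<subseteq> \<sigma> - {v}"
      have "H = \<sigma> - {v}" using card_subset_eq[OF _ H(2)] fs inS_card[OF H(1)] cv by simp
      then show False using oth[of v] v H(1) by auto
    qed
    ultimately have "insert 0 (\<sigma> - {v}) \<in> Pc d" unfolding Pc_def by blast
    moreover have "card (insert 0 (\<sigma> - {v})) = Suc d" using cv z fs by simp
    ultimately have "Bd d (sb (insert 0 (\<sigma> - {v})))" by (rule Bd_sb)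
    then show "Bd d (T v)" unfolding T_def by (rule Bd_scale)
  qed
  have "Bd d (\<lambda>\<tau>. sb \<sigma> \<tau> - 1 * (\<Sum>v\<in>\<sigma> - {x} - {y}. T v \<tau>))"
    using Bd_diff[OF Bd_sb[OF sP s(2)] rest] .
  moreover have "sb \<sigma> \<tau> = (\<Sum>v\<in>\<sigma>. T v \<tau>)" for \<tau>
    using sb_cone[OF sub fs z] unfolding T_def by metis
  ultimately show ?thesis unfolding T_def[symmetric] using split
    by (rule_tac Bd_cong) auto
qed

lemma R1_K: "1 \<le> i \<Longrightarrow> i \<le> d \<Longrightarrow> R1 d i \<in> Kc d"
proof -
  assume "1 \<le> i" "i \<le> d"
  then have "R1 d i \<in> gens d" unfolding gens_def by auto
  moreover have "R1 d i \<noteq> {}" using card_R1 by (metis card.empty nat.distinct(1))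
  ultimately show ?thesis unfolding Kc_def by blast
qed

lemma R2_K: "1 \<le> i \<Longrightarrow> i < d \<Longrightarrow> R2 d i \<in> Kc d"
proof -
  assume "1 \<le> i" "i < d"
  then have "R2 d i \<in> gens d" unfolding gens_def by auto
  moreover have "R2 d i \<noteq> {}" using card_R2 by (metis card.empty nat.distinct(1))
  ultimately show ?thesis unfolding Kc_def by blast
qed

lemma R0_K: "R0 d \<in> Kc d"
proof -
  have "R0 d \<in> gens d" unfolding gens_def by auto
  moreover have "R0 d \<noteq> {}" unfolding R0_def by auto
  ultimately show ?thesis unfolding Kc_def by blast
qed

end


context dd
begin

lemma path1: "1 \<le> i \<Longrightarrow> i \<le> Suc d \<Longrightarrow>
  Bd d (\<lambda>\<tau>. sb (insert 0 (W1 d i)) \<tau> - sg d ^ (i - 1) * sb (Aset d) \<tau>)"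
proof (induction i)
  case 0 then show ?case by simp
next
  case (Suc i)
  show ?case
  proof (cases "i = 0")
    case True
    have e: "insert 0 (W1 d (Suc 0)) = Aset d" unfolding W1_1' Aset_def by auto
    show ?thesis using Bd_zero
    proof (rule Bd_cong)
      fix \<tau>
      show "0 = sb (insert 0 (W1 d (Suc i))) \<tau> - sg d ^ (Suc i - 1) * sb (Aset d) \<tau>"
        unfolding True e by simp
    qed
  next
    case False
    then have i: "1 \<le> i" "i \<le> d" using Suc.prems by auto
    have IH: "Bd d (\<lambda>\<tau>. sb (insert 0 (W1 d i)) \<tau> - sg d ^ (i - 1) * sb (Aset d) \<tau>)"
      using Suc.IH i by simp
    have "f1 d i < f1 d (i + d)" by (rule strict_monoD[OF f1_mono]) (use d2 in simp)
    then have xy: "f1 d (i + d) \<noteq> f1 d i" by simp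
    have R: "Bd d (\<lambda>\<tau>. face_sign (R1 d i) (f1 d (i+d)) * sb (insert 0 (R1 d i - {f1 d (i+d)})) \<tau> +
        face_sign (R1 d i) (f1 d i) * sb (insert 0 (R1 d i - {f1 d i})) \<tau>)"
    proof (rule rel2[OF R1_K[OF i] card_R1 in_R1(1) in_R1(2) xy])
      fix v assume v: "v \<in> R1 d i" "v \<noteq> f1 d (i + d)" "v \<noteq> f1 d i"
      show "\<not> inS d (R1 d i - {v})"
      proof
        assume "inS d (R1 d i - {v})"
        then consider (a) j where "j \<in> {1..Suc d}" "R1 d i - {v} = W1 d j"
          | (b) j where "j \<in> {1..d}" "R1 d i - {v} = W2 d j" unfolding inS_def by blast
        then show False
        proof cases
          case a
          then have "j = i \<or> j = Suc i" using W1_R1 by blast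
          then show False
          proof
            assume "j = i"
            then have "R1 d i - {v} = R1 d i - {f1 d (i+d)}" using a(2) W1_facet(1) by simp
            then show False using diff_single_eq[OF v(1) in_R1(1)] v(2) by blast
          next
            assume "j = Suc i"
            then have "R1 d i - {v} = R1 d i - {f1 d i}" using a(2) W1_facet(2) by simp
            then show False using diff_single_eq[OF v(1) in_R1(2)] v(3) by blast
          qed
        next
          case b
          then show False using W2_not_R1 by auto
        qed
      qed
    qed
    have R': "Bd d (\<lambda>\<tau>. (-1)^d * sb (insert 0 (W1 d i)) \<tau> + sb (insert 0 (W1 d (Suc i))) \<tau>)"
      using R unfolding fs_R1 W1_facet[symmetric] by simp
    have "Bd d (\<lambda>\<tau>. ((-1)^d * sb (insert 0 (W1 d i)) \<tau> + sb (insert 0 (W1 d (Suc i))) \<tau>) -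
       (-1)^d * (sb (insert 0 (W1 d i)) \<tau> - sg d ^ (i - 1) * sb (Aset d) \<tau>))"
      by (rule Bd_diff[OF R' IH])
    then show ?thesis
    proof (rule Bd_cong)
      fix \<tau>
      show "(-1)^d * sb (insert 0 (W1 d i)) \<tau> + sb (insert 0 (W1 d (Suc i))) \<tau> -
         (-1)^d * (sb (insert 0 (W1 d i)) \<tau> - sg d ^ (i - 1) * sb (Aset d) \<tau>) =
         sb (insert 0 (W1 d (Suc i))) \<tau> - sg d ^ (Suc i - 1) * sb (Aset d) \<tau>"
        using sg_step[OF i(1)] by (simp add: algebra_simps)
    qed
  qed
qed

lemma path2: "1 \<le> i \<Longrightarrow> i \<le> d \<Longrightarrow>
  Bd d (\<lambda>\<tau>. sb (insert 0 (W2 d i)) \<tau> + sg d ^ i * sb (Aset d) \<tau>)"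
proof (induction i)
  case 0 then show ?case by simp
next
  case (Suc i)
  show ?case
  proof (cases "i = 0")
    case True
    have xy: "Suc d \<noteq> 2" using d2 by simp
    have R: "Bd d (\<lambda>\<tau>. face_sign (R0 d) (Suc d) * sb (insert 0 (R0 d - {Suc d})) \<tau> +
        face_sign (R0 d) 2 * sb (insert 0 (R0 d - {2})) \<tau>)"
    proof (rule rel2[OF R0_K card_R0 in_R0(1) in_R0(2) xy])
      fix v assume v: "v \<in> R0 d" "v \<noteq> Suc d" "v \<noteq> 2"
      show "\<not> inS d (R0 d - {v})"
      proof
        assume "inS d (R0 d - {v})"
        then consider (a) j where "j \<in> {1..Suc d}" "R0 d - {v} = W1 d j"
          | (b) j where "j \<in> {1..d}" "R0 d - {v} = W2 d j" unfolding inS_def by blast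
        then show False
        proof cases
          case a
          then have "j = 1" using W1_R0 by auto
          then have "R0 d - {v} = R0 d - {Suc d}" using a(2) R0_facets(1) by simp
          then show False using diff_single_eq[OF v(1) in_R0(1)] v(2) by blast
        next
          case b
          then have "j = 1" using W2_R0 by auto
          then have "R0 d - {v} = R0 d - {2}" using b(2) R0_facets(2) by simp
          then show False using diff_single_eq[OF v(1) in_R0(2)] v(3) by blast
        qed
      qed
    qed
    have A: "insert 0 (W1 d 1) = Aset d" unfolding W1_1 Aset_def by auto
    have R': "Bd d (\<lambda>\<tau>. (-1)^d * sb (Aset d) \<tau> + (-1) * sb (insert 0 (W2 d 1)) \<tau>)"
      using R unfolding fs_R0 R0_facets[symmetric] A by simp
    have "Bd d (\<lambda>\<tau>. (-1) * ((-1)^d * sb (Aset d) \<tau> + (-1) * sb (insert 0 (W2 d 1)) \<tau>))"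
      by (rule Bd_scale[OF R'])
    then show ?thesis
    proof (rule Bd_cong)
      fix \<tau>
      show "(-1) * ((-1)^d * sb (Aset d) \<tau> + (-1) * sb (insert 0 (W2 d 1)) \<tau>) =
          sb (insert 0 (W2 d (Suc i))) \<tau> + sg d ^ Suc i * sb (Aset d) \<tau>"
        using True unfolding sg_def by simp
    qed
  next
    case False
    then have i: "1 \<le> i" "i < d" using Suc.prems by auto
    have IH: "Bd d (\<lambda>\<tau>. sb (insert 0 (W2 d i)) \<tau> + sg d ^ i * sb (Aset d) \<tau>)"
      using Suc.IH i by simp
    have "f2 d i < f2 d (i + d)" by (rule strict_monoD[OF f2_mono]) (use d2 in simp)
    then have xy: "f2 d (i + d) \<noteq> f2 d i" by simp
    have R: "Bd d (\<lambda>\<tau>. face_sign (R2 d i) (f2 d (i+d)) * sb (insert 0 (R2 d i - {f2 d (i+d)})) \<tau> +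
        face_sign (R2 d i) (f2 d i) * sb (insert 0 (R2 d i - {f2 d i})) \<tau>)"
    proof (rule rel2[OF R2_K[OF i] card_R2 in_R2(1) in_R2(2) xy])
      fix v assume v: "v \<in> R2 d i" "v \<noteq> f2 d (i + d)" "v \<noteq> f2 d i"
      show "\<not> inS d (R2 d i - {v})"
      proof
        assume "inS d (R2 d i - {v})"
        then consider (a) j where "j \<in> {1..Suc d}" "R2 d i - {v} = W1 d j"
          | (b) j where "j \<in> {1..d}" "R2 d i - {v} = W2 d j" unfolding inS_def by blast
        then show False
        proof cases
          case a
          then show False using W1_not_R2 by auto
        next
          case b
          then have "j = i \<or> j = Suc i" using W2_R2 by blast
          then show False
          proof
            assume "j = i"
            then have "R2 d i - {v} = R2 d i - {f2 d (i+d)}" using b(2) W2_facet(1) by simp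
            then show False using diff_single_eq[OF v(1) in_R2(1)] v(2) by blast
          next
            assume "j = Suc i"
            then have "R2 d i - {v} = R2 d i - {f2 d i}" using b(2) W2_facet(2) by simp
            then show False using diff_single_eq[OF v(1) in_R2(2)] v(3) by blast
          qed
        qed
      qed
    qed
    have R': "Bd d (\<lambda>\<tau>. (-1)^d * sb (insert 0 (W2 d i)) \<tau> + sb (insert 0 (W2 d (Suc i))) \<tau>)"
      using R unfolding fs_R2 W2_facet[symmetric] by simp
    have "Bd d (\<lambda>\<tau>. ((-1)^d * sb (insert 0 (W2 d i)) \<tau> + sb (insert 0 (W2 d (Suc i))) \<tau>) -
       (-1)^d * (sb (insert 0 (W2 d i)) \<tau> + sg d ^ i * sb (Aset d) \<tau>))"
      by (rule Bd_diff[OF R' IH])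
    then show ?thesis
    proof (rule Bd_cong)
      fix \<tau>
      show "(-1)^d * sb (insert 0 (W2 d i)) \<tau> + sb (insert 0 (W2 d (Suc i))) \<tau> -
         (-1)^d * (sb (insert 0 (W2 d i)) \<tau> + sg d ^ i * sb (Aset d) \<tau>) =
         sb (insert 0 (W2 d (Suc i))) \<tau> + sg d ^ Suc i * sb (Aset d) \<tau>"
        using sg_step[of "Suc i"] by (simp add: algebra_simps)
    qed
  qed
qed

end


context dd
begin

lemma W1_UU: "1 \<le> i \<Longrightarrow> i \<le> Suc d \<Longrightarrow> insert 0 (W1 d i) \<subseteq> UU d"
  unfolding W1_def UU_def f1_def by auto
lemma W2_UU: "1 \<le> i \<Longrightarrow> i \<le> d \<Longrightarrow> insert 0 (W2 d i) \<subseteq> UU d"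
  unfolding W2_def UU_def f2_def by auto

lemma ivl_inj: "{i..<i+d} = {j..<j+d} \<Longrightarrow> i = (j::nat)"
proof -
  assume e: "{i..<i+d} = {j..<j+d}"
  have "i \<in> {i..<i+d}" "j \<in> {j..<j+d}" using d2 by auto
  then have "i \<in> {j..<j+d}" "j \<in> {i..<i+d}" using e by auto
  then show "i = j" by auto
qed

lemma W1_inj: "W1 d i = W1 d j \<Longrightarrow> i = j"
  unfolding W1_def using inj_image_eq_iff[OF inj1] ivl_inj by metis
lemma W2_inj: "W2 d i = W2 d j \<Longrightarrow> i = j"
  unfolding W2_def using inj_image_eq_iff[OF inj2] ivl_inj by metis
lemma W12_ne: "1 \<le> j \<Longrightarrow> j \<le> d \<Longrightarrow> W1 d i \<noteq> W2 d j"
proof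
  assume "1 \<le> j" "j \<le> d" "W1 d i = W2 d j"
  then have "Suc d \<in> W1 d i" using W2_has by simp
  then obtain x where "Suc d = f1 d x" unfolding W1_def by auto
  then show False using f1_ne[of d x] by simp
qed

lemma S1_eval:
  assumes "0 \<notin> G"
  shows "(\<Sum>i\<in>{1..Suc d}. z (W1 d i) * ind (insert 0 (W1 d i)) (insert 0 G)) =
    (if \<exists>k\<in>{1..Suc d}. G = W1 d k then z G else 0)"
proof -
  have "(\<Sum>i\<in>{1..Suc d}. z (W1 d i) * ind (insert 0 (W1 d i)) (insert 0 G)) =
      (\<Sum>i\<in>{1..Suc d}. if G = W1 d i then z G else 0)"
  proof (intro sum.cong refl)
    fix i assume "i \<in> {1..Suc d}"
    then have "0 \<notin> W1 d i" using W_pos1 by auto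
    then show "z (W1 d i) * ind (insert 0 (W1 d i)) (insert 0 G) = (if G = W1 d i then z G else 0)"
      using ind_ins[of "W1 d i" G] assms by auto
  qed
  also have "\<dots> = (if \<exists>k\<in>{1..Suc d}. G = W1 d k then z G else 0)"
  proof (cases "\<exists>k\<in>{1..Suc d}. G = W1 d k")
    case True
    then obtain k where k: "k \<in> {1..Suc d}" "G = W1 d k" by blast
    have "(\<Sum>i\<in>{1..Suc d}. if G = W1 d i then z G else 0) = z G"
    proof (rule sum_pick1[of _ k])
      fix j assume "j \<in> {1..Suc d}"
      show "(if G = W1 d j then z G else 0) = (if j = k then z G else 0)"
        using k W1_inj by metis
    qed (use k in auto)
    then show ?thesis using True by simp
  next
    case False
    then show ?thesis by (intro trans[OF sum.neutral]) auto
  qed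
  finally show ?thesis .
qed

lemma S2_eval:
  assumes "0 \<notin> G"
  shows "(\<Sum>i\<in>{1..d}. z (W2 d i) * ind (insert 0 (W2 d i)) (insert 0 G)) =
    (if \<exists>k\<in>{1..d}. G = W2 d k then z G else 0)"
proof -
  have "(\<Sum>i\<in>{1..d}. z (W2 d i) * ind (insert 0 (W2 d i)) (insert 0 G)) =
      (\<Sum>i\<in>{1..d}. if G = W2 d i then z G else 0)"
  proof (intro sum.cong refl)
    fix i assume "i \<in> {1..d}"
    then have "0 \<notin> W2 d i" using W_pos2 by auto
    then show "z (W2 d i) * ind (insert 0 (W2 d i)) (insert 0 G) = (if G = W2 d i then z G else 0)"
      using ind_ins[of "W2 d i" G] assms by auto
  qed
  also have "\<dots> = (if \<exists>k\<in>{1..d}. G = W2 d k then z G else 0)"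
  proof (cases "\<exists>k\<in>{1..d}. G = W2 d k")
    case True
    then obtain k where k: "k \<in> {1..d}" "G = W2 d k" by blast
    have "(\<Sum>i\<in>{1..d}. if G = W2 d i then z G else 0) = z G"
    proof (rule sum_pick1[of _ k])
      fix j assume "j \<in> {1..d}"
      show "(if G = W2 d j then z G else 0) = (if j = k then z G else 0)"
        using k W2_inj by metis
    qed (use k in auto)
    then show ?thesis using True by simp
  next
    case False
    then show ?thesis by (intro trans[OF sum.neutral]) auto
  qed
  finally show ?thesis .
qed

end


context dd
begin

lemma Pc_ball: "\<forall>\<sigma>\<in>Pc d. \<sigma> \<subseteq> UU d" using Pc_sub by blast

lemma gen:
  assumes zc: "chain (Pc d) (d - 1) z" and zb: "bd (Pc d) z = (\<lambda>_. 0)"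
  shows "Bd d (\<lambda>\<tau>. z \<tau> - psi d z * sb (Aset d) \<tau>)"
proof -
  have d1: "1 \<le> d - 1" using d2 by simp
  have bz: "bdU (UU d) z = (\<lambda>_. 0)" using bd_eq[OF Pc_sc Pc_ball UU_fin zc d1] zb by simp
  have hz: "bdU (UU d) (hc z) = z" by (rule cone[OF UU_fin UU_0 bz])
  define cP where "cP X = (if 0 \<in> X \<and> \<not> inS d (X - {0}) then z (X - {0}) else 0)" for X
  define S1 where "S1 X = (\<Sum>i\<in>{1..Suc d}. z (W1 d i) * ind (insert 0 (W1 d i)) X)" for X
  define S2 where "S2 X = (\<Sum>i\<in>{1..d}. z (W2 d i) * ind (insert 0 (W2 d i)) X)" for X
  have dec: "hc z = (\<lambda>X. cP X + (S1 X + S2 X))"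
  proof
    fix X
    show "hc z X = cP X + (S1 X + S2 X)"
    proof (cases "0 \<in> X")
      case False
      have "S1 X = 0" unfolding S1_def ind_def using False by (intro sum.neutral) auto
      moreover have "S2 X = 0" unfolding S2_def ind_def using False by (intro sum.neutral) auto
      ultimately show ?thesis using False unfolding hc_def cP_def by simp
    next
      case True
      define G where "G = X - {0}"
      have X: "X = insert 0 G" "0 \<notin> G" using True unfolding G_def by auto
      have e1: "S1 X = (if \<exists>k\<in>{1..Suc d}. G = W1 d k then z G else 0)"
        unfolding S1_def X(1) by (rule S1_eval[OF X(2)])
      have e2: "S2 X = (if \<exists>k\<in>{1..d}. G = W2 d k then z G else 0)"
        unfolding S2_def X(1) by (rule S2_eval[OF X(2)])
      have hcX: "hc z X = z G" unfolding hc_def G_def using True by simp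
      have cPX: "cP X = (if inS d G then 0 else z G)" unfolding cP_def G_def using True by simp
      consider (a) "\<exists>k\<in>{1..Suc d}. G = W1 d k" | (b) "\<exists>k\<in>{1..d}. G = W2 d k" | (c) "\<not> inS d G"
        unfolding inS_def by blast
      then show ?thesis
      proof cases
        case a
        then have "\<not> (\<exists>k\<in>{1..d}. G = W2 d k)" using W12_ne by auto
        moreover have "inS d G" using a unfolding inS_def by blast
        ultimately show ?thesis using a unfolding e1 e2 hcX cPX by simp
      next
        case b
        then have "\<not> (\<exists>k\<in>{1..Suc d}. G = W1 d k)" using W12_ne by fastforce
        moreover have "inS d G" using b unfolding inS_def by blast
        ultimately show ?thesis using b unfolding e1 e2 hcX cPX by simp
      next
        case c
        then have "\<not> (\<exists>k\<in>{1..Suc d}. G = W1 d k)" "\<not> (\<exists>k\<in>{1..d}. G = W2 d k)" unfolding inS_def by blast+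
        then show ?thesis using c unfolding e1 e2 hcX cPX by simp
      qed
    qed
  qed
  have cPc: "chain (Pc d) d cP"
    unfolding chain_def
  proof (intro allI impI)
    fix X assume "cP X \<noteq> 0"
    then have X: "0 \<in> X" "\<not> inS d (X - {0})" "z (X - {0}) \<noteq> 0" unfolding cP_def by (auto split: if_splits)
    define G where "G = X - {0}"
    have G: "G \<in> Pc d" "card G = d" using zc X(3) d2 unfolding chain_def G_def by auto
    have G0: "0 \<notin> G" unfolding G_def by simp
    have GK: "G \<in> Kc d" using Pc_cases[OF G(1)] G0 by auto
    have fG: "finite G" using Kc_sub[OF GK] by (rule finite_subset) simp
    have "\<forall>H. inS d H \<longrightarrow> \<not> H \<subseteq> G"
    proof (intro allI impI notI)
      fix H assume H: "inS d H" "H \<subseteq> G"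
      have "H = G" using card_subset_eq[OF fG H(2)] inS_card[OF H(1)] G(2) by simp
      then show False using H(1) X(2) unfolding G_def by simp
    qed
    then have "insert 0 G \<in> Pc d" using GK unfolding Pc_def by blast
    moreover have "X = insert 0 G" using X(1) unfolding G_def by auto
    moreover have "card (insert 0 G) = Suc d" using G(2) G0 fG by simp
    ultimately show "X \<in> Pc d \<and> card X = Suc d" by simp
  qed
  have bS1: "bdU (UU d) S1 = (\<lambda>\<tau>. \<Sum>i\<in>{1..Suc d}. z (W1 d i) * sb (insert 0 (W1 d i)) \<tau>)"
    unfolding S1_def[abs_def] bdU_sum
  proof (intro ext sum.cong refl)
    fix \<tau> i assume "i \<in> {1..Suc d}"
    then have "insert 0 (W1 d i) \<subseteq> UU d" using W1_UU by auto
    then show "bdU (UU d) (\<lambda>X. z (W1 d i) * ind (insert 0 (W1 d i)) X) \<tau> = z (W1 d i) * sb (insert 0 (W1 d i)) \<tau>"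
      using bdU_scale[of "UU d" "z (W1 d i)" "ind (insert 0 (W1 d i))"] bdU_ind[OF UU_fin] by simp
  qed
  have bS2: "bdU (UU d) S2 = (\<lambda>\<tau>. \<Sum>i\<in>{1..d}. z (W2 d i) * sb (insert 0 (W2 d i)) \<tau>)"
    unfolding S2_def[abs_def] bdU_sum
  proof (intro ext sum.cong refl)
    fix \<tau> i assume "i \<in> {1..d}"
    then have "insert 0 (W2 d i) \<subseteq> UU d" using W2_UU by auto
    then show "bdU (UU d) (\<lambda>X. z (W2 d i) * ind (insert 0 (W2 d i)) X) \<tau> = z (W2 d i) * sb (insert 0 (W2 d i)) \<tau>"
      using bdU_scale[of "UU d" "z (W2 d i)" "ind (insert 0 (W2 d i))"] bdU_ind[OF UU_fin] by simp
  qed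
  have zeq: "z \<tau> = bdU (UU d) cP \<tau> + (\<Sum>i\<in>{1..Suc d}. z (W1 d i) * sb (insert 0 (W1 d i)) \<tau>)
      + (\<Sum>i\<in>{1..d}. z (W2 d i) * sb (insert 0 (W2 d i)) \<tau>)" for \<tau>
  proof -
    have "z \<tau> = bdU (UU d) (\<lambda>X. cP X + (S1 X + S2 X)) \<tau>" using hz dec by simp
    also have "\<dots> = bdU (UU d) cP \<tau> + (bdU (UU d) S1 \<tau> + bdU (UU d) S2 \<tau>)"
      unfolding bdU_add[of "UU d" cP] bdU_add[of "UU d" S1] by simp
    finally show ?thesis unfolding bS1 bS2 by simp
  qed
  define T1 where "T1 \<tau> = (\<Sum>i\<in>{1..Suc d}. z (W1 d i) * (sb (insert 0 (W1 d i)) \<tau> - sg d ^ (i - 1) * sb (Aset d) \<tau>))" for \<tau>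
  define T2 where "T2 \<tau> = (\<Sum>i\<in>{1..d}. z (W2 d i) * (sb (insert 0 (W2 d i)) \<tau> + sg d ^ i * sb (Aset d) \<tau>))" for \<tau>
  have BT1: "Bd d T1" unfolding T1_def[abs_def]
    by (rule Bd_sum, intro ballI, rule Bd_scale, rule path1) auto
  have BT2: "Bd d T2" unfolding T2_def[abs_def]
    by (rule Bd_sum, intro ballI, rule Bd_scale, rule path2) auto
  have BcP: "Bd d (bdU (UU d) cP)" unfolding Bd_def using cPc by blast
  have "Bd d (\<lambda>\<tau>. bdU (UU d) cP \<tau> + (T1 \<tau> + T2 \<tau>))"
    by (rule Bd_add[OF BcP Bd_add[OF BT1 BT2]])
  then show ?thesis
  proof (rule Bd_cong)
    fix \<tau>
    have t1: "T1 \<tau> = (\<Sum>i\<in>{1..Suc d}. z (W1 d i) * sb (insert 0 (W1 d i)) \<tau>) -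
        (\<Sum>i\<in>{1..Suc d}. sg d ^ (i - 1) * z (W1 d i)) * sb (Aset d) \<tau>"
    proof -
      have "T1 \<tau> = (\<Sum>i\<in>{1..Suc d}. z (W1 d i) * sb (insert 0 (W1 d i)) \<tau> - (sg d ^ (i - 1) * z (W1 d i)) * sb (Aset d) \<tau>)"
        unfolding T1_def by (intro sum.cong refl) (simp add: algebra_simps)
      also have "\<dots> = (\<Sum>i\<in>{1..Suc d}. z (W1 d i) * sb (insert 0 (W1 d i)) \<tau>) -
        (\<Sum>i\<in>{1..Suc d}. sg d ^ (i - 1) * z (W1 d i)) * sb (Aset d) \<tau>"
        by (simp only: sum_subtractf sum_distrib_right)
      finally show ?thesis .
    qed
    have t2: "T2 \<tau> = (\<Sum>i\<in>{1..d}. z (W2 d i) * sb (insert 0 (W2 d i)) \<tau>) +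
        (\<Sum>i\<in>{1..d}. sg d ^ i * z (W2 d i)) * sb (Aset d) \<tau>"
    proof -
      have "T2 \<tau> = (\<Sum>i\<in>{1..d}. z (W2 d i) * sb (insert 0 (W2 d i)) \<tau> + (sg d ^ i * z (W2 d i)) * sb (Aset d) \<tau>)"
        unfolding T2_def by (intro sum.cong refl) (simp add: algebra_simps)
      also have "\<dots> = (\<Sum>i\<in>{1..d}. z (W2 d i) * sb (insert 0 (W2 d i)) \<tau>) +
        (\<Sum>i\<in>{1..d}. sg d ^ i * z (W2 d i)) * sb (Aset d) \<tau>"
        by (simp only: sum.distrib sum_distrib_right)
      finally show ?thesis .
    qed
    show "bdU (UU d) cP \<tau> + (T1 \<tau> + T2 \<tau>) = z \<tau> - psi d z * sb (Aset d) \<tau>"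
      unfolding t1 t2 zeq[of \<tau>] psi_def by (simp add: algebra_simps)
  qed
qed

end


lemma inversions_sorted: "sorted xs \<Longrightarrow> inversions xs = 0"
proof -
  assume s: "sorted xs"
  have e: "{(i, j). i < j \<and> j < length xs \<and> xs ! i > xs ! j} = {}"
  proof (rule equals0I)
    fix p assume "p \<in> {(i, j). i < j \<and> j < length xs \<and> xs ! i > xs ! j}"
    then obtain i j where "p = (i, j)" "i < j" "j < length xs" "xs ! i > xs ! j" by blast
    then show False using sorted_nth_mono[OF s, of i j] by simp
  qed
  show ?thesis unfolding inversions_def e by simp
qed

lemma delete_nth_upt:
  assumes "i < n - m"
  shows "delete_nth i [m..<n] = [m..<m+i] @ [Suc (m+i)..<n]"
  unfolding delete_nth_def using assms by (simp add: take_upt drop_upt add.commute)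

lemma osimplex_upt:
  assumes "i < n - m"
  shows "osimplex (delete_nth i [m..<n]) \<tau> = (if \<tau> = {m..<n} - {m+i} then 1 else 0)"
proof -
  have "sorted ([m..<m+i] @ [Suc (m+i)..<n])" by (simp add: sorted_append)
  then have "inversions (delete_nth i [m..<n]) = 0" using delete_nth_upt[OF assms] inversions_sorted by simp
  moreover have "set (delete_nth i [m..<n]) = {m..<n} - {m+i}" using delete_nth_upt[OF assms] assms by auto
  ultimately show ?thesis unfolding osimplex_def by simp
qed

lemma alt_bd_upt: "alt_bd_chain [m..<n] = sb {m..<n}"
proof
  fix \<tau>
  have "alt_bd_chain [m..<n] \<tau> = (\<Sum>i<n - m. if \<tau> = {m..<n} - {m+i} then (-1)^i else 0)"
    unfolding alt_bd_chain_def
  proof (intro sum.cong)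
    show "{..<length [m..<n]} = {..<n - m}" by simp
    fix i assume "i \<in> {..<n - m}"
    then show "(-1)^i * osimplex (delete_nth i [m..<n]) \<tau> = (if \<tau> = {m..<n} - {m+i} then (-1)^i else 0)"
      using osimplex_upt[of i n m \<tau>] by simp
  qed
  also have "\<dots> = (\<Sum>i<n - m. if \<tau> = {m..<n} - {m+i} then face_sign {m..<n} (m+i) else 0)"
  proof (intro sum.cong refl)
    fix i assume "i \<in> {..<n - m}"
    have "{w\<in>{m..<n}. w < m + i} = {m..<m+i}" using \<open>i \<in> {..<n - m}\<close> by auto
    then show "(if \<tau> = {m..<n} - {m+i} then (-1)^i else 0) =
      (if \<tau> = {m..<n} - {m+i} then face_sign {m..<n} (m+i) else 0)" unfolding face_sign_def by simp
  qed
  also have "\<dots> = (\<Sum>v\<in>(\<lambda>i. m + i) ` {..<n - m}. if \<tau> = {m..<n} - {v} then face_sign {m..<n} v else 0)"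
    by (simp add: sum.reindex)
  also have "(\<lambda>i. m + i) ` {..<n - m} = {m..<n}"
  proof
    show "(\<lambda>i. m + i) ` {..<n - m} \<subseteq> {m..<n}" by auto
    show "{m..<n} \<subseteq> (\<lambda>i. m + i) ` {..<n - m}"
    proof
      fix x assume "x \<in> {m..<n}"
      then have "x = m + (x - m)" "x - m \<in> {..<n - m}" by auto
      then show "x \<in> (\<lambda>i. m + i) ` {..<n - m}" by blast
    qed
  qed
  finally show "alt_bd_chain [m..<n] \<tau> = sb {m..<n} \<tau>" unfolding sb_def by simp
qed

lemma coherent_upt: "coherent_ordering K [m..<n]"
  unfolding coherent_ordering_def
proof (intro conjI allI impI)
  show "distinct [m..<n]" by simp
  fix F
  have "sorted (filter (\<lambda>v. v \<in> F) [m..<n])" using sorted_wrt_filter[of "(\<le>)" "[m..<n]"] by simp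
  then show "even (inversions (filter (\<lambda>v. v \<in> F) [m..<n]))" using inversions_sorted by simp
qed

lemma sb_support: "sb X \<tau> \<noteq> 0 \<Longrightarrow> \<exists>v\<in>X. \<tau> = X - {v}"
proof (rule ccontr)
  assume "sb X \<tau> \<noteq> 0" "\<not> (\<exists>v\<in>X. \<tau> = X - {v})"
  then have "sb X \<tau> = 0" unfolding sb_def by (intro sum.neutral) auto
  then show False using \<open>sb X \<tau> \<noteq> 0\<close> by simp
qed

context dd
begin

lemma cyc_sb:
  assumes X: "X \<subseteq> UU d" "finite X" "card X = Suc d" and fac: "\<forall>v\<in>X. X - {v} \<in> Pc d"
  shows "is_cycle (Pc d) (d - 1) (sb X)"
proof -
  have ch: "chain (Pc d) (d - 1) (sb X)"
    unfolding chain_def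
  proof (intro allI impI)
    fix \<tau> assume "sb X \<tau> \<noteq> 0"
    then obtain v where v: "v \<in> X" "\<tau> = X - {v}" using sb_support by blast
    then show "\<tau> \<in> Pc d \<and> card \<tau> = Suc (d - 1)" using fac X d2 by auto
  qed
  have "bd (Pc d) (sb X) = bdU (UU d) (sb X)" using bd_eq[OF Pc_sc Pc_ball UU_fin ch] d2 by simp
  also have "\<dots> = (\<lambda>_. 0)" using bdU_ind[OF UU_fin X(1)] bdU_bdU[OF UU_fin] by metis
  finally show ?thesis using ch unfolding is_cycle_def by simp
qed

lemma Bd_bnd: "Bd d x \<Longrightarrow> is_boundary (Pc d) (d - 1) x"
proof -
  assume "Bd d x"
  then obtain c where c: "chain (Pc d) d c" "x = bdU (UU d) c" unfolding Bd_def by blast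
  have "bd (Pc d) c = bdU (UU d) c" using bd_eq[OF Pc_sc Pc_ball UU_fin c(1)] d2 by simp
  moreover have "Suc (d - 1) = d" using d2 by simp
  ultimately have "chain (Pc d) (Suc (d - 1)) c \<and> x = bd (Pc d) c" using c by simp
  then show ?thesis unfolding is_boundary_def by blast
qed

lemma bnd_Bd: "is_boundary (Pc d) (d - 1) x \<Longrightarrow> Bd d x"
proof -
  assume "is_boundary (Pc d) (d - 1) x"
  then obtain c where c0: "chain (Pc d) (Suc (d - 1)) c" "x = bd (Pc d) c" unfolding is_boundary_def by blast
  have "Suc (d - 1) = d" using d2 by simp
  then have c: "chain (Pc d) d c" "x = bd (Pc d) c" using c0 by simp_all
  have "bd (Pc d) c = bdU (UU d) c" using bd_eq[OF Pc_sc Pc_ball UU_fin c(1)] d2 by simp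
  then show ?thesis unfolding Bd_def using c by blast
qed

lemma cyc_comb:
  assumes "is_cycle (Pc d) (d - 1) x" "is_cycle (Pc d) (d - 1) y"
  shows "is_cycle (Pc d) (d - 1) (\<lambda>\<tau>. a * x \<tau> + b * y \<tau>)"
proof -
  have cx: "chain (Pc d) (d - 1) x" "chain (Pc d) (d - 1) y" using assms unfolding is_cycle_def by auto
  have ch: "chain (Pc d) (d - 1) (\<lambda>\<tau>. a * x \<tau> + b * y \<tau>)"
    using chain_add[OF chain_scale[OF cx(1)] chain_scale[OF cx(2)]] .
  have d1: "1 \<le> d - 1" using d2 by simp
  have bx: "bdU (UU d) x = (\<lambda>_. 0)" "bdU (UU d) y = (\<lambda>_. 0)"
    using assms bd_eq[OF Pc_sc Pc_ball UU_fin cx(1) d1] bd_eq[OF Pc_sc Pc_ball UU_fin cx(2) d1]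
    unfolding is_cycle_def by simp_all
  have "bd (Pc d) (\<lambda>\<tau>. a * x \<tau> + b * y \<tau>) = bdU (UU d) (\<lambda>\<tau>. a * x \<tau> + b * y \<tau>)"
    by (rule bd_eq[OF Pc_sc Pc_ball UU_fin ch d1])
  also have "\<dots> = (\<lambda>_. 0)" unfolding bdU_add bdU_scale bx by simp
  finally show ?thesis using ch unfolding is_cycle_def by simp
qed

lemma A_in: "0 \<in> Aset d" unfolding Aset_def by simp

lemma A_notin: "Aset d \<notin> Pc d"
proof (rule notI)
  assume AP: "Aset d \<in> Pc d"
  have "(Aset d \<in> Kc d \<and> 0 \<notin> Aset d) \<or> Aset d = {0} \<or>
   (\<exists>F. Aset d = insert 0 F \<and> 0 \<notin> F \<and> F \<in> Kc d \<and> (\<forall>H. inS d H \<longrightarrow> \<not> H \<subseteq> F))"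
    by (rule Pc_cases[OF AP])
  then show False
  proof (elim disjE exE conjE)
    assume "Aset d \<in> Kc d" "0 \<notin> Aset d" then show False using A_in by simp
  next
    assume "Aset d = {0}" then show False using card_A d2 by simp
  next
    fix F assume F: "Aset d = insert 0 F" "0 \<notin> F" "F \<in> Kc d" "\<forall>H. inS d H \<longrightarrow> \<not> H \<subseteq> F"
    have "F = Aset d - {0}" using F(1,2) by auto
    then have "W1 d 1 \<subseteq> F" using A_facet by simp
    moreover have "inS d (W1 d 1)" unfolding inS_def by auto
    ultimately show False using F(4) by blast
  qed
qed

lemma A_faces: "F \<subseteq> Aset d \<Longrightarrow> F \<noteq> {} \<Longrightarrow> F \<noteq> Aset d \<Longrightarrow> F \<in> Pc d"
proof -
  assume F: "F \<subseteq> Aset d" "F \<noteq> {}" "F \<noteq> Aset d"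
  have R0s: "Aset d - {0} \<subseteq> R0 d" unfolding Aset_def R0_def by auto
  have R0g: "R0 d \<in> gens d" unfolding gens_def by auto
  show "F \<in> Pc d"
  proof (cases "0 \<in> F")
    case False
    then have "F \<subseteq> R0 d" using F R0s by auto
    then have "F \<in> Kc d" using F R0g unfolding Kc_def by blast
    then show ?thesis unfolding Pc_def by blast
  next
    case True
    show ?thesis
    proof (cases "F = {0}")
      case True then show ?thesis unfolding Pc_def by blast
    next
      case False
      define G where "G = F - {0}"
      have G: "G \<noteq> {}" "G \<subseteq> R0 d" "F = insert 0 G" using False True F R0s unfolding G_def by auto
      have GK: "G \<in> Kc d" using G R0g unfolding Kc_def by blast
      have "G \<subset> Aset d - {0}" using F(1,3) G(3) A_in unfolding G_def by auto
      then have cG: "card G < d" using psubset_card_mono[of "Aset d - {0}" G] fin_A card_A A_in by simp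
      have "\<forall>H. inS d H \<longrightarrow> \<not> H \<subseteq> G"
      proof (intro allI impI notI)
        fix H assume "inS d H" "H \<subseteq> G"
        then have "card H \<le> card G" using card_mono[OF _ \<open>H \<subseteq> G\<close>] fin_A \<open>G \<subset> Aset d - {0}\<close>
          by (meson finite_Diff finite_subset psubset_imp_subset)
        then show False using inS_card[OF \<open>inS d H\<close>] cG by simp
      qed
      then show ?thesis using GK G(3) unfolding Pc_def by blast
    qed
  qed
qed

lemma B_notin: "Bset d \<notin> Pc d"
proof
  assume "Bset d \<in> Pc d"
  have "Suc d \<in> Bset d" "d + 2 \<in> Bset d" "Suc (2*d) \<in> Bset d" unfolding Bset_def using d2 by auto
  from Pd_cases[OF \<open>Bset d \<in> Pc d\<close> card_B] show False
  proof (elim disjE bexE exE conjE)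
    fix i assume "Bset d = R1 d i"
    then obtain x where "Suc d = f1 d x" using \<open>Suc d \<in> Bset d\<close> unfolding R1_def by auto
    then show False using f1_ne[of d x] by simp
  next
    fix i assume "Bset d = R2 d i"
    then obtain x where "d + 2 = f2 d x" using \<open>d + 2 \<in> Bset d\<close> unfolding R2_def by auto
    then show False using f2_ne[of d x] by simp
  next
    assume "Bset d = R0 d"
    then show False using \<open>Suc (2*d) \<in> Bset d\<close> d2 unfolding R0_def by auto
  next
    fix F assume "Bset d = insert 0 F"
    then have "0 \<in> Bset d" by simp
    then show False unfolding Bset_def by simp
  qed
qed

lemma B_faces: "F \<subseteq> Bset d \<Longrightarrow> F \<noteq> {} \<Longrightarrow> F \<noteq> Bset d \<Longrightarrow> F \<in> Pc d"
proof -
  assume F: "F \<subseteq> Bset d" "F \<noteq> {}" "F \<noteq> Bset d"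
  then obtain v where v: "v \<in> Bset d" "v \<notin> F" by blast
  then have "F \<subseteq> Bset d - {v}" "Bset d - {v} \<in> gens d" using F unfolding gens_def by auto
  then have "F \<in> Kc d" using F unfolding Kc_def by blast
  then show ?thesis unfolding Pc_def by blast
qed

lemma A_UU: "Aset d \<subseteq> UU d" unfolding Aset_def UU_def by auto
lemma B_UU: "Bset d \<subseteq> UU d" unfolding Bset_def UU_def by auto

lemma cycA: "is_cycle (Pc d) (d - 1) (sb (Aset d))"
proof (rule cyc_sb[OF A_UU fin_A card_A], intro ballI)
  fix v assume v: "v \<in> Aset d"
  have "card (Aset d - {v}) = d" using v fin_A card_A by simp
  then have "Aset d - {v} \<noteq> {}" using d2 by (metis card.empty not_numeral_le_zero)
  moreover have "Aset d - {v} \<noteq> Aset d" using v by auto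
  ultimately show "Aset d - {v} \<in> Pc d" using A_faces[of "Aset d - {v}"] by blast
qed

lemma cycB: "is_cycle (Pc d) (d - 1) (sb (Bset d))"
proof (rule cyc_sb[OF B_UU fin_B card_B], intro ballI)
  fix v assume v: "v \<in> Bset d"
  have "card (Bset d - {v}) = d" using v fin_B card_B by simp
  then have "Bset d - {v} \<noteq> {}" using d2 by (metis card.empty not_numeral_le_zero)
  moreover have "Bset d - {v} \<noteq> Bset d" using v by auto
  ultimately show "Bset d - {v} \<in> Pc d" using B_faces[of "Bset d - {v}"] by blast
qed
end


context dd
begin

lemma setA: "set [0..<Suc d] = Aset d" unfolding Aset_def by auto
lemma setB: "set [Suc d..<2*d+2] = Bset d" unfolding Bset_def by auto

lemma hom_self: "is_cycle (Pc d) (d - 1) z \<Longrightarrow> homologous (Pc d) (d - 1) z z"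
proof -
  assume c: "is_cycle (Pc d) (d - 1) z"
  have "Bd d (\<lambda>\<tau>. z \<tau> - z \<tau>)" using Bd_zero by simp
  then show ?thesis unfolding homologous_def using c Bd_bnd by blast
qed

lemma presented: "presented_2a_eq_b (Pc d) (d - 1) (sb (Aset d)) (sb (Bset d))"
  unfolding presented_2a_eq_b_def
proof (intro conjI allI impI)
  show "is_cycle (Pc d) (d - 1) (sb (Aset d))" by (rule cycA)
  show "is_cycle (Pc d) (d - 1) (sb (Bset d))" by (rule cycB)
next
  fix z assume z: "is_cycle (Pc d) (d - 1) z"
  have c: "chain (Pc d) (d - 1) z" "bd (Pc d) z = (\<lambda>_. 0)" using z unfolding is_cycle_def by auto
  have "Bd d (\<lambda>\<tau>. z \<tau> - psi d z * sb (Aset d) \<tau>)" by (rule gen[OF c])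
  then have "Bd d (\<lambda>\<tau>. z \<tau> - (psi d z * sb (Aset d) \<tau> + 0 * sb (Bset d) \<tau>))" by simp
  then have "is_boundary (Pc d) (d - 1) (\<lambda>\<tau>. z \<tau> - (psi d z * sb (Aset d) \<tau> + 0 * sb (Bset d) \<tau>))"
    by (rule Bd_bnd)
  moreover have "is_cycle (Pc d) (d - 1) (\<lambda>\<tau>. psi d z * sb (Aset d) \<tau> + 0 * sb (Bset d) \<tau>)"
    by (rule cyc_comb[OF cycA cycB])
  ultimately have "homologous (Pc d) (d - 1) z (\<lambda>\<tau>. psi d z * sb (Aset d) \<tau> + 0 * sb (Bset d) \<tau>)"
    unfolding homologous_def using z by blast
  then show "\<exists>m n. homologous (Pc d) (d - 1) z (\<lambda>\<tau>. m * sb (Aset d) \<tau> + n * sb (Bset d) \<tau>)" by blast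
next
  fix m n :: int
  show "is_boundary (Pc d) (d - 1) (\<lambda>\<tau>. m * sb (Aset d) \<tau> + n * sb (Bset d) \<tau>) =
    (\<exists>j. m = 2 * j \<and> n = - j)"
  proof
    assume "is_boundary (Pc d) (d - 1) (\<lambda>\<tau>. m * sb (Aset d) \<tau> + n * sb (Bset d) \<tau>)"
    then have "psi d (\<lambda>\<tau>. m * sb (Aset d) \<tau> + n * sb (Bset d) \<tau>) = 0" using bnd_Bd Bd_psi by blast
    then have "m + 2 * n = 0" unfolding psi_comb psi_A psi_B by simp
    then show "\<exists>j. m = 2 * j \<and> n = - j" by (intro exI[of _ "- n"]) simp
  next
    assume "\<exists>j. m = 2 * j \<and> n = - j"
    then obtain j where j: "m = 2 * j" "n = - j" by blast
    have c: "chain (Pc d) (d - 1) (sb (Bset d))" "bd (Pc d) (sb (Bset d)) = (\<lambda>_. 0)"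
      using cycB unfolding is_cycle_def by auto
    have "Bd d (\<lambda>\<tau>. sb (Bset d) \<tau> - psi d (sb (Bset d)) * sb (Aset d) \<tau>)" by (rule gen[OF c])
    then have "Bd d (\<lambda>\<tau>. (- j) * (sb (Bset d) \<tau> - psi d (sb (Bset d)) * sb (Aset d) \<tau>))" by (rule Bd_scale)
    then have "Bd d (\<lambda>\<tau>. m * sb (Aset d) \<tau> + n * sb (Bset d) \<tau>)"
    proof (rule Bd_cong)
      fix \<tau>
      show "(- j) * (sb (Bset d) \<tau> - psi d (sb (Bset d)) * sb (Aset d) \<tau>) = m * sb (Aset d) \<tau> + n * sb (Bset d) \<tau>"
        unfolding psi_B j by (simp add: algebra_simps)
    qed
    then show "is_boundary (Pc d) (d - 1) (\<lambda>\<tau>. m * sb (Aset d) \<tau> + n * sb (Bset d) \<tau>)" by (rule Bd_bnd)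
  qed
qed

lemma coh_A: "coherently_represented (Pc d) d (sb (Aset d)) [0..<Suc d]"
  unfolding coherently_represented_def
proof (intro conjI)
  show "length [0..<Suc d] = Suc d" by simp
  show "induced_simplex_boundary (Pc d) d (set [0..<Suc d])"
    unfolding induced_simplex_boundary_def setA using fin_A card_A A_notin A_faces by blast
  show "coherent_ordering (Pc d) [0..<Suc d]" by (rule coherent_upt)
  have "alt_bd_chain [0..<Suc d] = sb (Aset d)" using alt_bd_upt setA by (metis set_upt)
  then show "homologous (Pc d) (d - 1) (sb (Aset d)) (alt_bd_chain [0..<Suc d])"
    using hom_self[OF cycA] by simp
qed

lemma coh_B: "coherently_represented (Pc d) d (sb (Bset d)) [Suc d..<2*d+2]"
  unfolding coherently_represented_def
proof (intro conjI)
  show "length [Suc d..<2*d+2] = Suc d" by simp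
  show "induced_simplex_boundary (Pc d) d (set [Suc d..<2*d+2])"
    unfolding induced_simplex_boundary_def setB using fin_B card_B B_notin B_faces by blast
  show "coherent_ordering (Pc d) [Suc d..<2*d+2]" by (rule coherent_upt)
  have "alt_bd_chain [Suc d..<2*d+2] = sb (Bset d)" using alt_bd_upt setB by (metis set_upt)
  then show "homologous (Pc d) (d - 1) (sb (Bset d)) (alt_bd_chain [Suc d..<2*d+2])"
    using hom_self[OF cycB] by simp
qed

lemma main: "\<exists>P za zb vsa vsb. simplicial_complex P \<and>
           presented_2a_eq_b P (d - 1) za zb \<and>
           coherently_represented P d za vsa \<and> coherently_represented P d zb vsb \<and>
           set vsa \<inter> set vsb = {}"
proof -
  have "set [0..<Suc d] \<inter> set [Suc d..<2*d+2] = {}" by auto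
  then show ?thesis using Pc_sc presented coh_A coh_B by blast
qed

end

theorem lemma11:
  fixes d :: nat
  assumes "d \<ge> 2"
  shows "\<exists>P za zb vsa vsb. simplicial_complex P \<and>
           presented_2a_eq_b P (d - 1) za zb \<and>
           coherently_represented P d za vsa \<and> coherently_represented P d zb vsb \<and>
           set vsa \<inter> set vsb = {}"
proof -
  interpret dd d using assms by unfold_locales
  show ?thesis by (rule main)
qed



end
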